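(* Let $\underline{\mathbb{G}}=(\mathbb{G},\mathcal{V},\omega_{\mathcal{V}},\mathcal{F},\omega_{\mathcal{F}})$ be a packaged ribbon graph and $e$ an edge of $\mathbb{G}$. Then \[\boldsymbol{T}(\underline{\mathbb{G}};\boldsymbol{x},\boldsymbol{y}) = x^{2-\eta(e)}\boldsymbol{T}(\underline{\mathbb{G}}\backslash e;\boldsymbol{x},\boldsymbol{y})+y^{2-\mu(e)}\boldsymbol{T}(\underline{\mathbb{G}}/e;\boldsymbol{x},\boldsymbol{y}).\] If $\mathbb{G}$ has no edges, then \[\boldsymbol{T}(\underline{\mathbb{G}};\boldsymbol{x},\boldsymbol{y})=\prod_{[f]\in \mathcal{F}} x_{(1- |[f]| +\omega_{\mathcal{F}}([f]))/2} \prod_{[v]\in\mathcal{V}} y_{(1-|[v]| +\omega_{\mathcal{V}}([v]))/2},\] where $|[a]|$ is the number of elements of the block $[a]$.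
   Context: All ribbon graphs are orientable. A ribbon graph $\mathbb{G}=(V,E)$ is an orientable surface with boundary formed as a union of discs $V$ (vertices) and discs $E$ (edges) such that vertices and edges meet in disjoint arcs, each arc lies on the boundary of exactly one vertex and one edge, and each edge contains exactly two such arcs. For a ribbon graph, $v,e,f,k$ denote numbers of vertices, edges, boundary components, components. For a graph, $v,e,k$ are numbers of vertices, edges, components, and nullity $n=e-v+k$. $\mathbb{G}\backslash e$ removes edge $e$; $\mathbb{G}|A$ (for $A\subseteq E$) is the spanning ribbon subgraph with edge set $A$; $A^c=E\setminus A$. $\mathbb{G}/e$ (contraction) is obtained by taking the boundary curve(s) of $e\cup u\cup v$ ($u,v$ the ends of $e$), attaching a disc to each curve as a new vertex, and removing $e,u,v$. The dual $\mathbb{G}^*$ is obtained by capping each boundary component of $\mathbb{G}$ with a disc; these discs are the vertices of $\mathbb{G}^*$ and the edges are those of $\mathbb{G}$; so vertices of $\mathbb{G}^*$ are identified with boundary components of $\mathbb{G}$ and vice versa. A packaged ribbon graph is a tuple $\underline{\mathbb{G}}=(\mathbb{G},\mathcal{V},\omega_{\mathcal{V}},\mathcal{F},\omega_{\mathcal{F}})$ where $\mathbb{G}=(V,E)$ is a ribbon graph with set of boundary components $F$, $\mathcal{V}$ a partition of $V$, $\mathcal{F}$ a partition of $F$, and $\omega_{\mathcal{V}}:\mathcal{V}\to\mathbb{N}_0$, $\omega_{\mathcal{F}}:\mathcal{F}\to\mathbb{N}_0$ weightings; $[v]$, $[f]$ denote blocks. For an edge $e$, $\eta(e)$ is the number of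 blocks of $\mathcal{F}$ containing a boundary component meeting $e$, and $\mu(e)$ is the number of blocks of $\mathcal{V}$ containing a vertex incident with $e$ (each is 1 or 2). Deletion $\underline{\mathbb{G}}\backslash e$: ribbon graph $\mathbb{G}\backslash e$, $\mathcal{V},\omega_{\mathcal{V}}$ unchanged, boundary components not meeting $e$ keep blocks/weights. (i) If $e$ meets a single boundary component $f$, deletion creates $f',g'$ replacing $f$; $[f]$ becomes $([f]\setminus\{f\})\cup\{f',g'\}$ with weight $\omega_{\mathcal{F}}([f])+1$. (ii) If $e$ meets $f\neq g$ with $[f]=[g]$, deletion creates one component $f'$; block becomes $([f]\setminus\{f,g\})\cup\{f'\}$ with weight $\omega_{\mathcal{F}}([f])+1$. (iii) If $e$ meets $f\neq g$ with $[f]\ne[g]$, the blocks $[f],[g]$ are replaced by $([f]\cup[g]\setminus\{f,g\})\cup\{f'\}$ with weight $\omega_{\mathcal{F}}([f])+\omega_{\mathcal{F}}([g])$. Contraction $\underline{\mathbb{G}}/e$: ribbon graph $\mathbb{G}/e$, $\mathcal{F},\omega_{\mathcal{F}}$ transported via the natural correspondence of boundary components. (i) If $e$ is a loop at $u$, contraction creates two vertices $u',v'$ replacing $u$; $[u]$ becomes $([u]\setminus\{u\})\cup\{u',v'\}$ with weight $\omega_{\mathcal{V}}([u])+1$. (ii) If $e$ has ends $u\neq v$ with $[u]=[v]$, merged vertex $u'$; block becomes $([u]\setminus\{u,v\})\cup\{u'\}$ with weight $\omega_{\mathcal{V}}([u])+1$. (iii) If $[u]\neq[v]$, blocks $[u],[v]$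 replaced by $([u]\cup[v]\setminus\{u,v\})\cup\{u'\}$ with weight $\omega_{\mathcal{V}}([u])+\omega_{\mathcal{V}}([v])$. Other blocks/weights unchanged in all cases. Packaging: for a ribbon graph $\mathbb{H}$ with a partition $\mathcal{P}$ of its vertex set and block weights $\omega$, $G(\mathbb{H};\mathcal{P})$ is the graph with vertex set $\mathcal{P}$ and one edge $([u],[v])$ for each edge $(u,v)$ of $\mathbb{H}$ (loops and multiple edges allowed), vertices weighted by $\omega$. For a subgraph $K$ of $G(\mathbb{H};\mathcal{P})$, $\mathbb{H}[K]$ is the ribbon subgraph of $\mathbb{H}$ whose vertices are all vertices of $\mathbb{H}$ lying in blocks that are vertices of $K$ and whose edges are those corresponding to edges of $K$; $f(\mathbb{H}[K])$ is its number of boundary components; $\omega(K)=\sum_{[v]\in V(K)}\omega([v])$. Here $G(\mathbb{G}|A;\mathcal{V})$ uses $\mathcal{V},\omega_{\mathcal{V}}$, and $G(\mathbb{G}^*|A^c;\mathcal{F})$ uses $\mathcal{F},\omega_{\mathcal{F}}$ as a partition (with weights) of the vertex set of $\mathbb{G}^*$. The packaged surface Tutte polynomial, with variables $\boldsymbol{x}=(x,x_0,x_{1/2},x_1,\dots)$, $\boldsymbol{y}=(y,y_0,y_{1/2},y_1,\dots)$, is \[\boldsymbol{T}(\underline{\mathbb{G}};\boldsymbol{x},\boldsymbol{y})= \sum_{A\subseteq E} x^{n(G(\mathbb{G}^*|A^c;\mathcal{F}))}y^{n(G(\mathbb{G}|A;\mathcal{V}))}\prod_{H \text{ cpt. of }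 G(\mathbb{G}^*|A^c;\mathcal{F})}x_{g(\mathbb{G}^*,H)}\prod_{K \text{ cpt. of } G(\mathbb{G}|A;\mathcal{V})}y_{g(\mathbb{G},K)},\] where $g(\mathbb{G},K)=\tfrac12(2k(K)+e(K)-v(K)+\omega_{\mathcal{V}}(K)-f(\mathbb{G}[K]))$ and $g(\mathbb{G}^*,H)=\tfrac12(2k(H)+e(H)-v(H)+\omega_{\mathcal{F}}(H)-f(\mathbb{G}^*[H]))$. *)

theory Defs
  imports "HOL-Combinatorics.Permutations"
begin

(* Orientable ribbon graphs are encoded as combinatorial maps (rotation systems).
   darts : finite set of darts (half-edges);
   sig   : vertex rotation (permutation of darts), vertices = sig-orbits;
   alp   : edge involution, edges = alp-orbits {x, alp x} of size 2;
   faces (boundary components) = orbits of sig o alp.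
   An isolated vertex (no incident edge) is encoded by a "marker" dart m with
   alp m = m and sig m = m: it forms one vertex and one boundary component.
   The partition V of vertices is encoded by a labelling vlab of darts that is
   constant on vertices (blocks = label values), with block weights wV;
   likewise the partition F of boundary components by flab (constant on faces)
   and weights wF. *)

record ('d, 'b, 'c) pmap =
  darts :: "'d set"
  sig   :: "'d \<Rightarrow> 'd"
  alp   :: "'d \<Rightarrow> 'd"
  vlab  :: "'d \<Rightarrow> 'b"
  flab  :: "'d \<Rightarrow> 'c"
  wV    :: "'b \<Rightarrow> nat"
  wF    :: "'c \<Rightarrow> nat"

definition phi :: "('d, 'b, 'c) pmap \<Rightarrow> 'd \<Rightarrow> 'd" where
  "phi P = sig P \<circ> alp P"

definition packaged_ribbon_graph :: "('d, 'b, 'c) pmap \<Rightarrow> bool" where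
  "packaged_ribbon_graph P \<longleftrightarrow>
     finite (darts P) \<and> (sig P permutes darts P) \<and> (alp P permutes darts P) \<and>
     (\<forall>x\<in>darts P. alp P (alp P x) = x) \<and>
     (\<forall>x\<in>darts P. alp P x = x \<longrightarrow> sig P x = x) \<and>
     (\<forall>x\<in>darts P. vlab P (sig P x) = vlab P x) \<and>
     (\<forall>x\<in>darts P. flab P (phi P x) = flab P x)"

definition orb :: "('d \<Rightarrow> 'd) \<Rightarrow> 'd \<Rightarrow> 'd set" where
  "orb f x = range (\<lambda>n. (f ^^ n) x)"

definition orbits :: "('d \<Rightarrow> 'd) \<Rightarrow> 'd set \<Rightarrow> 'd set set" where
  "orbits f S = orb f ` S"

definition edges :: "('d, 'b, 'c) pmap \<Rightarrow> 'd set set" where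
  "edges P = {{x, alp P x} | x. x \<in> darts P \<and> alp P x \<noteq> x}"

definition vertices :: "('d, 'b, 'c) pmap \<Rightarrow> 'd set set" where
  "vertices P = orbits (sig P) (darts P)"

definition faces :: "('d, 'b, 'c) pmap \<Rightarrow> 'd set set" where
  "faces P = orbits (phi P) (darts P)"

definition eta :: "('d, 'b, 'c) pmap \<Rightarrow> 'd \<Rightarrow> nat" where
  "eta P d = card {flab P d, flab P (alp P d)}"

definition mu :: "('d, 'b, 'c) pmap \<Rightarrow> 'd \<Rightarrow> nat" where
  "mu P d = card {vlab P d, vlab P (alp P d)}"

definition skip :: "('d \<Rightarrow> 'd) \<Rightarrow> 'd \<Rightarrow> 'd \<Rightarrow> 'd \<Rightarrow> 'd" where
  "skip p d d' x =
     (if p x \<notin> {d, d'} then p x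
      else if p (p x) \<notin> {d, d'} then p (p x) else p (p (p x)))"

(* darts kept as markers of isolated vertices created by the removal *)
definition markers :: "('d \<Rightarrow> 'd) \<Rightarrow> 'd \<Rightarrow> 'd \<Rightarrow> 'd set" where
  "markers p d d' =
     {y \<in> {d, d'}. p y = y} \<union> (if p d = d' \<and> p d' = d then {d} else {})"

definition new_darts :: "'d set \<Rightarrow> ('d \<Rightarrow> 'd) \<Rightarrow> 'd \<Rightarrow> 'd \<Rightarrow> 'd set" where
  "new_darts D p d d' = (D - {d, d'}) \<union> markers p d d'"

definition new_perm :: "'d set \<Rightarrow> ('d \<Rightarrow> 'd) \<Rightarrow> 'd \<Rightarrow> 'd \<Rightarrow> 'd \<Rightarrow> 'd" where
  "new_perm D p d d' x = (if x \<in> D - {d, d'} then skip p d d' x else x)"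

definition new_alp :: "('d \<Rightarrow> 'd) \<Rightarrow> ('d \<Rightarrow> 'd) \<Rightarrow> 'd \<Rightarrow> 'd \<Rightarrow> 'd \<Rightarrow> 'd" where
  "new_alp a p d d' x = (if x \<in> markers p d d' then x else a x)"

definition pdelete :: "('d, 'b, 'c) pmap \<Rightarrow> 'd \<Rightarrow> ('d, 'b, 'c) pmap" where
  "pdelete P d =
    (let d' = alp P d; s = sig P; c1 = flab P d; c2 = flab P d' in
     P\<lparr> darts := new_darts (darts P) s d d',
        sig := new_perm (darts P) s d d',
        alp := new_alp (alp P) s d d',
        flab := (if c1 = c2 then flab P
                 else (\<lambda>x. if flab P x = c2 then c1 else flab P x)),
        wF := (if c1 = c2 then (wF P)(c1 := wF P c1 + 1)
               else (wF P)(c1 := wF P c1 + wF P c2)) \<rparr>)"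

(* ---------- packaged contraction of the edge e = {d, alp d} ----------
   Combinatorially: remove the edge from the face permutation phi = sig o alp
   (i.e. delete e in the dual) and recover the vertex rotation as phi' o alp'. *)

definition pcontract :: "('d, 'b, 'c) pmap \<Rightarrow> 'd \<Rightarrow> ('d, 'b, 'c) pmap" where
  "pcontract P d =
    (let d' = alp P d; f = phi P; a' = new_alp (alp P) f d d';
         f' = new_perm (darts P) f d d'; b1 = vlab P d; b2 = vlab P d' in
     P\<lparr> darts := new_darts (darts P) f d d',
        sig := f' \<circ> a',
        alp := a',
        vlab := (if b1 = b2 then vlab P
                 else (\<lambda>x. if vlab P x = b2 then b1 else vlab P x)),
        wV := (if b1 = b2 then (wV P)(b1 := wV P b1 + 1)
               else (wV P)(b1 := wV P b1 + wV P b2)) \<rparr>)"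

(* rotation of the spanning ribbon subgraph with dart set S (first return map) *)
definition sub_perm :: "('d \<Rightarrow> 'd) \<Rightarrow> 'd set \<Rightarrow> 'd \<Rightarrow> 'd" where
  "sub_perm s S x = (s ^^ (LEAST k. 0 < k \<and> (s ^^ k) x \<in> S)) x"

(* boundary components of the spanning ribbon subgraph keeping the edges in A,
   for the map with dart set D, vertex rotation s and edge involution a *)
definition sub_faces :: "'d set \<Rightarrow> ('d \<Rightarrow> 'd) \<Rightarrow> ('d \<Rightarrow> 'd) \<Rightarrow> 'd set set \<Rightarrow> 'd set set" where
  "sub_faces D s a A =
     (let S = \<Union>A in
      orbits (sub_perm s S \<circ> a) S \<union> {orb s x | x. x \<in> D \<and> orb s x \<inter> S = {}})"

(* the vertex set (blocks) of the packaged graph G(H;P) *)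
definition blocks :: "'d set \<Rightarrow> ('d \<Rightarrow> 'b) \<Rightarrow> 'b set" where
  "blocks D lab = lab ` D"

(* connected component of block b in G(H|A;P) *)
definition comp :: "'d set \<Rightarrow> ('d \<Rightarrow> 'd) \<Rightarrow> ('d \<Rightarrow> 'b) \<Rightarrow> 'd set set \<Rightarrow> 'b \<Rightarrow> 'b set" where
  "comp D a lab A b =
     (let R = {(lab x, lab (a x)) | x. x \<in> \<Union>A} in
      {b' \<in> blocks D lab. (b, b') \<in> (R \<union> R\<inverse>)\<^sup>*})"

definition comps :: "'d set \<Rightarrow> ('d \<Rightarrow> 'd) \<Rightarrow> ('d \<Rightarrow> 'b) \<Rightarrow> 'd set set \<Rightarrow> 'b set set" where
  "comps D a lab A = comp D a lab A ` blocks D lab"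

definition nullity :: "'d set \<Rightarrow> ('d \<Rightarrow> 'd) \<Rightarrow> ('d \<Rightarrow> 'b) \<Rightarrow> 'd set set \<Rightarrow> nat" where
  "nullity D a lab A = card A + card (comps D a lab A) - card (blocks D lab)"

(* twice the genus-like quantity g(H,K) = (2k(K)+e(K)-v(K)+w(K)-f(H[K]))/2 *)
definition twice_g :: "'d set \<Rightarrow> ('d \<Rightarrow> 'd) \<Rightarrow> ('d \<Rightarrow> 'd) \<Rightarrow> ('d \<Rightarrow> 'b) \<Rightarrow> ('b \<Rightarrow> nat)
                         \<Rightarrow> 'd set set \<Rightarrow> 'b set \<Rightarrow> int" where
  "twice_g D s a lab w A K =
     2 + int (card {ed \<in> A. \<exists>x\<in>ed. lab x \<in> K}) - int (card K) + int (\<Sum>b\<in>K. w b)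
       - int (card {Fc \<in> sub_faces D s a A. \<exists>x\<in>Fc. lab x \<in> K})"

(* one half of a term of the sum; the variable family z is indexed by twice the subscript:
   z k stands for the variable z_{k/2} *)
definition half_term :: "'d set \<Rightarrow> ('d \<Rightarrow> 'd) \<Rightarrow> ('d \<Rightarrow> 'd) \<Rightarrow> ('d \<Rightarrow> 'b) \<Rightarrow> ('b \<Rightarrow> nat)
                         \<Rightarrow> 'd set set \<Rightarrow> 'a::comm_ring_1 \<Rightarrow> (int \<Rightarrow> 'a) \<Rightarrow> 'a" where
  "half_term D s a lab w A z zs =
     z ^ nullity D a lab A * (\<Prod>K\<in>comps D a lab A. zs (twice_g D s a lab w A K))"

(* packaged surface Tutte polynomial, evaluated at x, xs (xs k = x_{k/2}), y, ys (ys k = y_{k/2});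
   the dual G* has vertex rotation phi and the same edges, its vertex partition is F *)
definition pTutte :: "('d, 'b, 'c) pmap \<Rightarrow> 'a::comm_ring_1 \<Rightarrow> (int \<Rightarrow> 'a) \<Rightarrow> 'a \<Rightarrow> (int \<Rightarrow> 'a) \<Rightarrow> 'a" where
  "pTutte P x xs y ys =
     (\<Sum>A\<in>Pow (edges P).
        half_term (darts P) (phi P) (alp P) (flab P) (wF P) (edges P - A) x xs *
        half_term (darts P) (sig P) (alp P) (vlab P) (wV P) A y ys)"

definition vblock_size :: "('d, 'b, 'c) pmap \<Rightarrow> 'b \<Rightarrow> nat" where
  "vblock_size P b = card {v \<in> vertices P. \<exists>x\<in>v. vlab P x = b}"

definition fblock_size :: "('d, 'b, 'c) pmap \<Rightarrow> 'c \<Rightarrow> nat" where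
  "fblock_size P c = card {f \<in> faces P. \<exists>x\<in>f. flab P x = c}"

end

theory Submission
  imports Defs
begin


section \<open>Orbits of a bijection on a finite set\<close>

definition maps :: "('d \<Rightarrow> 'd) \<Rightarrow> 'd set \<Rightarrow> bool" where
  "maps g D \<longleftrightarrow> finite D \<and> (\<forall>x\<in>D. g x \<in> D) \<and> inj_on g D"

lemma maps_in: "maps g D \<Longrightarrow> x \<in> D \<Longrightarrow> g x \<in> D"
  by (auto simp: maps_def)

lemma funpow_in: "\<forall>x\<in>D. g x \<in> D \<Longrightarrow> x \<in> D \<Longrightarrow> (g ^^ n) x \<in> D"
  by (induction n) auto

lemma maps_funpow_in: "maps g D \<Longrightarrow> x \<in> D \<Longrightarrow> (g ^^ n) x \<in> D"
  using funpow_in by (metis maps_def)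

lemma maps_bij: "maps g D \<Longrightarrow> bij_betw g D D"
  unfolding maps_def bij_betw_def
  by (metis endo_inj_surj image_subsetI)

lemma maps_inj_funpow: "maps g D \<Longrightarrow> inj_on (g ^^ n) D"
  using bij_betw_funpow[OF maps_bij] bij_betw_imp_inj_on by blast

lemma funpow_split1: "i \<le> j \<Longrightarrow> (g ^^ (j - i)) ((g ^^ i) x) = (g ^^ j) x"
proof -
  assume "i \<le> j"
  have "(g ^^ (j - i)) ((g ^^ i) x) = (g ^^ (j - i + i)) x" by (simp add: funpow_add)
  then show ?thesis using \<open>i \<le> j\<close> by simp
qed

lemma funpow_split2: "i \<le> j \<Longrightarrow> (g ^^ i) ((g ^^ (j - i)) x) = (g ^^ j) x"
proof -
  assume "i \<le> j"
  have "(g ^^ i) ((g ^^ (j - i)) x) = (g ^^ (i + (j - i))) x" by (simp add: funpow_add)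
  then show ?thesis using \<open>i \<le> j\<close> by simp
qed

lemma funpow_cancel:
  assumes "maps g D" "x \<in> D" "(g ^^ i) x = (g ^^ j) x" "i \<le> j"
  shows "(g ^^ (j - i)) x = x"
proof -
  have "(g ^^ i) ((g ^^ (j - i)) x) = (g ^^ j) x"
    using funpow_split2[OF assms(4)] .
  then have "(g ^^ i) ((g ^^ (j - i)) x) = (g ^^ i) x" using assms(3) by simp
  then show ?thesis
    using maps_inj_funpow[OF assms(1), of i] maps_funpow_in[OF assms(1) assms(2)] assms(2)
    by (meson inj_on_def)
qed

lemma period:
  assumes "maps g D" "x \<in> D"
  shows "\<exists>n>0. (g ^^ n) x = x"
proof -
  have fin: "finite D" using assms by (simp add: maps_def)
  have "(\<lambda>n. (g ^^ n) x) ` {..card D} \<subseteq> D" using maps_funpow_in[OF assms] by auto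
  then have "card ((\<lambda>n. (g ^^ n) x) ` {..card D}) \<le> card D" using fin card_mono by blast
  then have "\<not> inj_on (\<lambda>n. (g ^^ n) x) {..card D}"
    using card_image by fastforce
  then obtain i j where ij: "i \<le> card D" "j \<le> card D" "i \<noteq> j" "(g ^^ i) x = (g ^^ j) x"
    unfolding inj_on_def by auto
  show ?thesis
  proof (cases "i < j")
    case True
    have "(g ^^ (j - i)) x = x" using funpow_cancel[OF assms ij(4)] True by simp
    then show ?thesis using True by (intro exI[of _ "j - i"]) simp
  next
    case False
    then have "j < i" using ij by auto
    have "(g ^^ (i - j)) x = x" using funpow_cancel[OF assms ij(4)[symmetric]] \<open>j < i\<close> by simp
    then show ?thesis using \<open>j < i\<close> by (intro exI[of _ "i - j"]) simp
  qed
qed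

lemma funpow_mult_period: "(g ^^ n) x = x \<Longrightarrow> (g ^^ (m * n)) x = x"
proof (induction m)
  case 0 then show ?case by simp
next
  case (Suc m)
  then show ?case by (simp add: funpow_add)
qed

lemma orb_self: "x \<in> orb g x"
  unfolding orb_def by (metis funpow_0 rangeI)

lemma orb_funpow: "(g ^^ n) x \<in> orb g x"
  unfolding orb_def by auto

lemma orb_trans: "y \<in> orb g x \<Longrightarrow> orb g y \<subseteq> orb g x"
proof
  fix z assume y: "y \<in> orb g x" and z: "z \<in> orb g y"
  obtain k where k: "y = (g ^^ k) x" using y unfolding orb_def by auto
  obtain n where n: "z = (g ^^ n) y" using z unfolding orb_def by auto
  have "z = (g ^^ (n + k)) x" unfolding n k by (simp add: funpow_add)
  then show "z \<in> orb g x" unfolding orb_def by auto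
qed

lemma orb_one: "g x \<in> orb g x"
  using orb_funpow[of 1 g x] by simp

lemma orb_subset: "maps g D \<Longrightarrow> x \<in> D \<Longrightarrow> orb g x \<subseteq> D"
  unfolding orb_def using maps_funpow_in[of g D x] by auto

lemma orb_sym:
  assumes "maps g D" "x \<in> D" "y \<in> orb g x"
  shows "x \<in> orb g y"
proof -
  obtain k where k: "y = (g ^^ k) x" using assms(3) unfolding orb_def by auto
  obtain p where p: "p > 0" "(g ^^ p) x = x" using period[OF assms(1,2)] by auto
  have "(g ^^ (k * p)) x = x" using funpow_mult_period[OF p(2)] by simp
  moreover have "k * p \<ge> k" using p(1) by simp
  ultimately have h: "(g ^^ (k * p - k)) y = x"
    unfolding k using funpow_split1[of k "k * p" g x] by simp
  show ?thesis using orb_funpow[of "k * p - k" g y] unfolding h .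
qed

lemma orb_eq:
  assumes "maps g D" "x \<in> D" "y \<in> orb g x"
  shows "orb g y = orb g x"
proof
  show "orb g y \<subseteq> orb g x" by (rule orb_trans[OF assms(3)])
  show "orb g x \<subseteq> orb g y" by (rule orb_trans[OF orb_sym[OF assms]])
qed

lemma orb_step: "maps g D \<Longrightarrow> x \<in> D \<Longrightarrow> g x \<in> orb g x"
  by (rule orb_one)

lemma orb_step_eq: "maps g D \<Longrightarrow> x \<in> D \<Longrightarrow> orb g (g x) = orb g x"
  using orb_eq orb_one by metis

lemma orb_closed:
  assumes "\<forall>y\<in>X. g y \<in> X" "x \<in> X"
  shows "orb g x \<subseteq> X"
  unfolding orb_def using funpow_in[OF assms] by auto

lemma funpow_cong_on:
  assumes "\<forall>y\<in>D. g y = h y" "\<forall>y\<in>D. g y \<in> D" "x \<in> D"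
  shows "(g ^^ n) x = (h ^^ n) x"
proof (induction n)
  case 0 then show ?case by simp
next
  case (Suc n)
  have "(g ^^ n) x \<in> D" using funpow_in assms by metis
  then show ?case using Suc assms by simp
qed

lemma orb_cong:
  assumes "\<forall>y\<in>D. g y = h y" "\<forall>y\<in>D. g y \<in> D" "x \<in> D"
  shows "orb g x = orb h x"
  unfolding orb_def using funpow_cong_on[OF assms] by auto

lemma orb_disj_or_eq:
  assumes "maps g D" "x \<in> D" "y \<in> D" "orb g x \<inter> orb g y \<noteq> {}"
  shows "orb g x = orb g y"
proof -
  obtain z where z: "z \<in> orb g x" "z \<in> orb g y" using assms(4) by auto
  show ?thesis using orb_eq[OF assms(1,2) z(1)] orb_eq[OF assms(1,3) z(2)] by simp
qed

lemma maps_cong: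
  assumes "maps g D" "\<forall>y\<in>D. g y = h y"
  shows "maps h D"
  using assms unfolding maps_def inj_on_def by auto

lemma maps_comp:
  assumes "maps g D" "maps h D" shows "maps (g \<circ> h) D"
proof -
  have hD: "h ` D \<subseteq> D" using assms(2) unfolding maps_def by auto
  have ig: "inj_on g D" and ih: "inj_on h D" using assms unfolding maps_def by auto
  have "inj_on g (h ` D)" using inj_on_subset[OF ig hD] .
  then have "inj_on (g \<circ> h) D" using comp_inj_on[OF ih] by blast
  then show ?thesis using assms unfolding maps_def by auto
qed

section \<open>First return maps\<close>

lemma sub_perm_exists:
  assumes "maps g D" "T \<subseteq> D" "x \<in> T"
  shows "\<exists>k. 0 < k \<and> (g ^^ k) x \<in> T"
proof -
  have "x \<in> D" using assms by auto
  then obtain n where "n > 0" "(g ^^ n) x = x" using period[OF assms(1)] by blast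
  then show ?thesis using assms(3) by auto
qed

lemma sub_perm_props:
  assumes "maps g D" "T \<subseteq> D" "x \<in> T"
  defines "k \<equiv> LEAST k. 0 < k \<and> (g ^^ k) x \<in> T"
  shows "0 < k" "(g ^^ k) x \<in> T" "sub_perm g T x = (g ^^ k) x"
    "\<And>j. 0 < j \<Longrightarrow> j < k \<Longrightarrow> (g ^^ j) x \<notin> T"
proof -
  have ex: "\<exists>k. 0 < k \<and> (g ^^ k) x \<in> T" using sub_perm_exists[OF assms(1-3)] .
  show "0 < k" "(g ^^ k) x \<in> T" using LeastI_ex[OF ex] unfolding k_def by auto
  show "sub_perm g T x = (g ^^ k) x" unfolding sub_perm_def k_def by simp
  show "\<And>j. 0 < j \<Longrightarrow> j < k \<Longrightarrow> (g ^^ j) x \<notin> T"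
    using not_less_Least unfolding k_def by blast
qed

lemma sub_perm_in: "maps g D \<Longrightarrow> T \<subseteq> D \<Longrightarrow> x \<in> T \<Longrightarrow> sub_perm g T x \<in> T"
  using sub_perm_props by metis

lemma sub_perm_in_orb: "maps g D \<Longrightarrow> T \<subseteq> D \<Longrightarrow> x \<in> T \<Longrightarrow> sub_perm g T x \<in> orb g x"
  using sub_perm_props orb_funpow by metis

lemma orb_sub_perm:
  assumes g: "maps g D" and T: "T \<subseteq> D" and x: "x \<in> T"
  shows "orb (sub_perm g T) x = orb g x \<inter> T"
proof
  let ?r = "sub_perm g T"
  have "((?r ^^ n) x) \<in> orb g x \<inter> T" for n
  proof (induction n)
    case 0 then show ?case using x orb_self by simp
  next
    case (Suc n)
    then have xn: "(?r ^^ n) x \<in> T" by blast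
    have h: "?r ((?r ^^ n) x) \<in> orb g ((?r ^^ n) x)" "?r ((?r ^^ n) x) \<in> T"
      using sub_perm_in_orb[OF g T xn] sub_perm_in[OF g T xn] by auto
    have "(?r ^^ n) x \<in> orb g x" using Suc.IH by blast
    then have "orb g ((?r ^^ n) x) \<subseteq> orb g x" by (rule orb_trans)
    then show ?case using h by auto
  qed
  then show "orb ?r x \<subseteq> orb g x \<inter> T" unfolding orb_def by auto
next
  let ?r = "sub_perm g T"
  have "\<forall>y\<in>T. (g ^^ n) y \<in> T \<longrightarrow> (g ^^ n) y \<in> orb ?r y" for n
  proof (induction n rule: less_induct)
    case (less n)
    show ?case
    proof (intro ballI impI)
      fix y assume y: "y \<in> T" and yn: "(g ^^ n) y \<in> T"
      show "(g ^^ n) y \<in> orb ?r y"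
      proof (cases "n = 0")
        case True then show ?thesis using orb_self by simp
      next
        case False
        define k where "k = (LEAST k. 0 < k \<and> (g ^^ k) y \<in> T)"
        have k: "0 < k" "(g ^^ k) y \<in> T" "?r y = (g ^^ k) y"
          using sub_perm_props[OF g T y] unfolding k_def by auto
        have "k \<le> n" unfolding k_def using False yn by (intro Least_le) auto
        then have eq: "(g ^^ n) y = (g ^^ (n - k)) (?r y)"
          using k(3) funpow_split1[of k n g y] by simp
        have "(g ^^ (n - k)) (?r y) \<in> orb ?r (?r y)"
          using less[rule_format, of "n - k" "?r y"] k False eq yn by auto
        moreover have "orb ?r (?r y) \<subseteq> orb ?r y"
          by (rule orb_trans[OF orb_one])
        ultimately show ?thesis using eq by auto
      qed
    qed
  qed
  then show "orb g x \<inter> T \<subseteq> orb ?r x" using x unfolding orb_def by auto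
qed

lemma maps_sub_perm:
  assumes g: "maps g D" and T: "T \<subseteq> D"
  shows "maps (sub_perm g T) T"
proof -
  have fin: "finite T" using g T finite_subset maps_def by blast
  have inj: "inj_on (sub_perm g T) T"
  proof (rule inj_onI)
    fix u v assume u: "u \<in> T" and v: "v \<in> T" and eq: "sub_perm g T u = sub_perm g T v"
    obtain ku where ku: "0 < ku" "sub_perm g T u = (g ^^ ku) u" "\<And>j. 0<j \<Longrightarrow> j<ku \<Longrightarrow> (g ^^ j) u \<notin> T"
      using sub_perm_props[OF g T u] by metis
    obtain kv where kv: "0 < kv" "sub_perm g T v = (g ^^ kv) v" "\<And>j. 0<j \<Longrightarrow> j<kv \<Longrightarrow> (g ^^ j) v \<notin> T"
      using sub_perm_props[OF g T v] by metis
    have uD: "u \<in> D" "v \<in> D" using u v T by auto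
    show "u = v"
    proof (cases ku kv rule: linorder_cases)
      case less
      have "(g ^^ ku) ((g ^^ (kv - ku)) v) = (g ^^ ku) u"
        using eq ku kv less funpow_split2[of ku kv g v] by simp
      then have "(g ^^ (kv - ku)) v = u"
        using maps_inj_funpow[OF g, of ku] maps_funpow_in[OF g] uD by (meson inj_on_def)
      then show ?thesis using kv(3)[of "kv - ku"] less ku(1) u by auto
    next
      case equal
      then show ?thesis using eq ku kv maps_inj_funpow[OF g, of ku] uD by (metis inj_on_def)
    next
      case greater
      have "(g ^^ kv) ((g ^^ (ku - kv)) u) = (g ^^ kv) v"
        using eq ku kv greater funpow_split2[of kv ku g u] by simp
      then have "(g ^^ (ku - kv)) u = v"
        using maps_inj_funpow[OF g, of kv] maps_funpow_in[OF g] uD by (meson inj_on_def)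
      then show ?thesis using ku(3)[of "ku - kv"] greater kv(1) v by auto
    qed
  qed
  show ?thesis unfolding maps_def using fin inj sub_perm_in[OF g T] by auto
qed

lemma sub_perm_comp:
  assumes g: "maps g D" and T: "T \<subseteq> D" and x: "x \<in> T"
    and tau1: "\<forall>y. y \<notin> T \<longrightarrow> tt y = y" and tau2: "\<forall>y\<in>T. tt y \<in> T"
  shows "sub_perm (g \<circ> tt) T x = sub_perm g T (tt x)"
proof -
  let ?h = "\<lambda>y. g (tt y)"
  have hc: "g \<circ> tt = ?h" by (rule ext) simp
  have tx: "tt x \<in> T" using tau2 x by auto
  define k where "k = (LEAST k. 0 < k \<and> (g ^^ k) (tt x) \<in> T)"
  have k: "0 < k" "(g ^^ k) (tt x) \<in> T" "sub_perm g T (tt x) = (g ^^ k) (tt x)"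
    "\<And>j. 0 < j \<Longrightarrow> j < k \<Longrightarrow> (g ^^ j) (tt x) \<notin> T"
    using sub_perm_props[OF g T tx] unfolding k_def by auto
  have it: "0 < n \<Longrightarrow> n \<le> k \<Longrightarrow> (?h ^^ n) x = (g ^^ n) (tt x)" for n
  proof (induction n)
    case 0 then show ?case by simp
  next
    case (Suc n)
    show ?case
    proof (cases "n = 0")
      case True then show ?thesis by simp
    next
      case False
      have "0 < n" "n \<le> k" using False Suc.prems by auto
      then have ih: "(?h ^^ n) x = (g ^^ n) (tt x)" by (rule Suc.IH)
      have nt: "(g ^^ n) (tt x) \<notin> T" using k(4)[of n] False Suc by auto
      show ?thesis using ih nt tau1 by simp
    qed
  qed
  have "(LEAST j. 0 < j \<and> (?h ^^ j) x \<in> T) = k"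
  proof (rule Least_equality)
    show "0 < k \<and> (?h ^^ k) x \<in> T" using it[of k] k by auto
    show "k \<le> j" if "0 < j \<and> (?h ^^ j) x \<in> T" for j
    proof (rule ccontr)
      assume "\<not> k \<le> j"
      then have "(?h ^^ j) x = (g ^^ j) (tt x)" using it[of j] that by auto
      then show False using k(4)[of j] that \<open>\<not> k \<le> j\<close> by auto
    qed
  qed
  then have "sub_perm (g \<circ> tt) T x = (?h ^^ k) x" unfolding sub_perm_def hc by simp
  then show ?thesis using it[of k] k by simp
qed

lemma skip_eq_sub_perm:
  assumes g: "maps p D" and dd: "d \<in> D" "d' \<in> D" "d \<noteq> d'" and x: "x \<in> D - {d, d'}"
  shows "skip p d d' x = sub_perm p (D - {d, d'}) x"
proof -
  let ?T = "D - {d, d'}"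
  have T: "?T \<subseteq> D" by auto
  define k where "k = (LEAST k. 0 < k \<and> (p ^^ k) x \<in> ?T)"
  have k: "0 < k" "(p ^^ k) x \<in> ?T" "sub_perm p ?T x = (p ^^ k) x"
    "\<And>j. 0 < j \<Longrightarrow> j < k \<Longrightarrow> (p ^^ j) x \<notin> ?T"
    using sub_perm_props[OF g T x] unfolding k_def by auto
  have xD: "x \<in> D" using x by auto
  have inD: "(p ^^ j) x \<in> D" for j using maps_funpow_in[OF g xD] .
  have dist: "0 < i \<Longrightarrow> i < j \<Longrightarrow> j < k \<Longrightarrow> (p ^^ i) x \<noteq> (p ^^ j) x" for i j
  proof
    assume "0 < i" "i < j" "j < k" "(p ^^ i) x = (p ^^ j) x"
    then have "(p ^^ (j - i)) x = x" using funpow_cancel[OF g xD] by auto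
    moreover have "0 < j - i" "j - i < k" using \<open>i < j\<close> \<open>j < k\<close> by auto
    ultimately show False using k(4)[of "j - i"] x by auto
  qed
  have p1: "(p ^^ 1) x = p x" "(p ^^ 2) x = p (p x)" "(p ^^ 3) x = p (p (p x))"
    by (simp_all add: numeral_3_eq_3 numeral_2_eq_2)
  have "k \<le> 3"
  proof (rule ccontr)
    assume nk: "\<not> k \<le> 3"
    have "(p ^^ 1) x \<notin> ?T" "(p ^^ 2) x \<notin> ?T" "(p ^^ 3) x \<notin> ?T"
      using k(4)[of 1] k(4)[of 2] k(4)[of 3] nk by auto
    then have m: "p x \<in> {d, d'}" "p (p x) \<in> {d, d'}" "p (p (p x)) \<in> {d, d'}"
      using inD[of 1] inD[of 2] inD[of 3] unfolding p1 by auto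
    have "(p ^^ 1) x \<noteq> (p ^^ 2) x" "(p ^^ 1) x \<noteq> (p ^^ 3) x" "(p ^^ 2) x \<noteq> (p ^^ 3) x"
      using dist[of 1 2] dist[of 1 3] dist[of 2 3] nk by auto
    then have "p x \<noteq> p (p x)" "p x \<noteq> p (p (p x))" "p (p x) \<noteq> p (p (p x))"
      unfolding p1 .
    then show False using m by auto
  qed
  then consider "k = 1" | "k = 2" | "k = 3" using k(1) by linarith
  then show ?thesis
  proof cases
    case 1 then show ?thesis using k p1 inD unfolding skip_def by auto
  next
    case 2
    have "p x \<in> {d, d'}" using k(4)[of 1] inD[of 1] 2 by auto
    moreover have "p (p x) \<in> ?T" using k(2) 2 p1 by simp
    moreover have "sub_perm p ?T x = p (p x)" using k(3) 2 p1 by simp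
    ultimately show ?thesis unfolding skip_def by auto
  next
    case 3
    have "p x \<in> {d, d'}" using k(4)[of 1] inD[of 1] 3 by auto
    moreover have "p (p x) \<in> {d, d'}" using k(4)[of 2] inD[of 2] 3 p1 by auto
    moreover have "sub_perm p ?T x = p (p (p x))" using k(3) 3 p1 by simp
    ultimately show ?thesis unfolding skip_def by auto
  qed
qed



lemma orb_fixed: "g x = x \<Longrightarrow> orb g x = {x}"
proof -
  assume "g x = x"
  then have "(g ^^ n) x = x" for n by (induction n) auto
  then show ?thesis unfolding orb_def by auto
qed

lemma orb_cong2:
  assumes "\<forall>y\<in>orb s x. g y = s y"
  shows "orb g x = orb s x"
proof -
  have "(g ^^ n) x = (s ^^ n) x" for n
  proof (induction n)
    case 0 then show ?case by simp
  next
    case (Suc n)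
    have "(s ^^ n) x \<in> orb s x" by (rule orb_funpow)
    then show ?case using Suc assms by simp
  qed
  then show ?thesis unfolding orb_def by auto
qed

lemma orb_two:
  assumes "g x = y" "g y = x"
  shows "orb g x = {x, y}"
proof -
  have "(g ^^ n) x \<in> {x, y}" for n
    by (induction n) (use assms in auto)
  moreover have "y \<in> orb g x" using orb_one assms by metis
  ultimately show ?thesis using orb_self[of x g] unfolding orb_def by auto
qed

lemma orbitsI: "x \<in> D \<Longrightarrow> orb g x \<in> orbits g D"
  unfolding orbits_def by auto

lemma orbitsE: "Ob \<in> orbits g D \<Longrightarrow> (\<And>x. x \<in> D \<Longrightarrow> Ob = orb g x \<Longrightarrow> P) \<Longrightarrow> P"
  unfolding orbits_def by auto

lemma label_walk:
  assumes g: "maps g D" and z: "z \<in> D" and T: "T \<subseteq> D" and ex: "\<exists>n. (g ^^ n) z \<in> T"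
    and L: "\<forall>y\<in>D - T. L (g y) = L y"
  shows "\<exists>n. (g ^^ n) z \<in> T \<and> L ((g ^^ n) z) = L z"
proof -
  define n where "n = (LEAST n. (g ^^ n) z \<in> T)"
  have n: "(g ^^ n) z \<in> T" unfolding n_def using ex by (rule LeastI_ex)
  have "j \<le> n \<Longrightarrow> L ((g ^^ j) z) = L z" for j
  proof (induction j)
    case 0 then show ?case by simp
  next
    case (Suc j)
    have "(g ^^ j) z \<notin> T" using not_less_Least[of j "\<lambda>n. (g ^^ n) z \<in> T"] Suc.prems
      unfolding n_def by auto
    moreover have "(g ^^ j) z \<in> D" using maps_funpow_in[OF g z] .
    ultimately show ?case using Suc L by simp
  qed
  then show ?thesis using n by blast
qed

lemma label_walk_sub:
  assumes g: "maps g D" and T: "T \<subseteq> D" and x: "x \<in> T"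
    and L: "\<forall>y\<in>D - T. L (g y) = L y"
  shows "L (sub_perm g T x) = L (g x)"
proof -
  define k where "k = (LEAST k. 0 < k \<and> (g ^^ k) x \<in> T)"
  have k: "0 < k" "(g ^^ k) x \<in> T" "sub_perm g T x = (g ^^ k) x"
    "\<And>j. 0 < j \<Longrightarrow> j < k \<Longrightarrow> (g ^^ j) x \<notin> T"
    using sub_perm_props[OF g T x] unfolding k_def by auto
  have xD: "x \<in> D" using x T by auto
  have "0 < j \<Longrightarrow> j \<le> k \<Longrightarrow> L ((g ^^ j) x) = L (g x)" for j
  proof (induction j)
    case 0 then show ?case by simp
  next
    case (Suc j)
    show ?case
    proof (cases "j = 0")
      case True then show ?thesis by simp
    next
      case False
      then have "(g ^^ j) x \<notin> T" using k(4)[of j] Suc.prems by auto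
      moreover have "(g ^^ j) x \<in> D" using maps_funpow_in[OF g xD] .
      moreover have "L ((g ^^ j) x) = L (g x)" using Suc False by auto
      ultimately show ?thesis using L by simp
    qed
  qed
  then show ?thesis using k by simp
qed

lemma markers_cong: "p d = q d \<Longrightarrow> p d' = q d' \<Longrightarrow> markers p d d' = markers q d d'"
  unfolding markers_def by auto

lemma markers_sub: "markers p d d' \<subseteq> {d, d'}"
  unfolding markers_def by auto

lemma small_orbit:
  assumes g: "maps g D" and dd: "d \<in> D" "d' \<in> D" "d \<noteq> d'" and x: "x \<in> D"
    and Ob: "orb g x \<inter> (D - {d, d'}) = {}"
  shows "\<exists>m. orb g x \<inter> markers g d d' = {m} \<and> m \<in> orb g x"
proof -
  have sub: "orb g x \<subseteq> {d, d'}" using Ob orb_subset[OF g x] by auto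
  have xd: "x \<in> {d, d'}" using sub orb_self[of x g] by blast
  have gx: "g x \<in> {d, d'}" using sub orb_one[of g x] by blast
  show ?thesis
  proof (cases "g x = x")
    case True
    then have "orb g x = {x}" by (rule orb_fixed[of g x])
    moreover have "x \<in> markers g d d'" using True xd unfolding markers_def by auto
    ultimately show ?thesis by auto
  next
    case False
    then have gx2: "g x \<noteq> x" by simp
    have ggx: "g (g x) \<in> {d, d'}" using sub orb_one[of g "g x"] orb_trans[OF orb_one[of g x]] by blast
    have "g (g x) = x"
    proof (rule ccontr)
      assume "g (g x) \<noteq> x"
      then have "g (g x) = g x" using ggx gx xd gx2 by auto
      moreover have "inj_on g D" using g unfolding maps_def by auto
      moreover have "g x \<in> D" "x \<in> D" using gx xd dd by auto
      ultimately have "g x = x" by (meson inj_onD)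
      then show False using gx2 by simp
    qed
    then have both: "g d = d' \<and> g d' = d" using xd gx gx2 by auto
    then have "markers g d d' = {d}" using dd unfolding markers_def by auto
    moreover have "orb g x = {d, d'}" using orb_two[of g d d'] both xd orb_two[of g d' d] by auto
    ultimately show ?thesis by auto
  qed
qed

lemma markers_fixed_orbit:
  assumes g: "maps g D" and dd: "d \<in> D" "d' \<in> D" "d \<noteq> d'" and m: "m \<in> markers g d d'"
  shows "orb g m \<inter> (D - {d, d'}) = {} \<and> orb g m \<inter> markers g d d' = {m}"
proof -
  have md: "m \<in> {d, d'}" using m markers_sub[of g d d'] by blast
  show ?thesis
  proof (cases "g m = m")
    case True
    have "orb g m = {m}" using orb_fixed[of g m, OF True] .
    then show ?thesis using m md by blast
  next
    case False
    have "m \<in> (if g d = d' \<and> g d' = d then {d} else {})"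
      using m False unfolding markers_def by blast
    then have c: "g d = d'" "g d' = d" "m = d" by (auto split: if_splits)
    have o: "orb g m = {d, d'}" using orb_two[of g d d'] c by simp
    have "markers g d d' = {d}" using c dd unfolding markers_def by auto
    then show ?thesis using o c by auto
  qed
qed

lemma small_orbit_label:
  assumes sub: "orb g x \<subseteq> {d, d'}" and L: "\<forall>y\<in>{d, d'}. L (g y) = L y"
  shows "\<forall>y\<in>orb g x. L y = L x"
proof -
  have "L ((g ^^ n) x) = L x" for n
  proof (induction n)
    case 0 then show ?case by simp
  next
    case (Suc n)
    have "(g ^^ n) x \<in> {d, d'}" using sub orb_funpow[of n g x] by blast
    then have "L (g ((g ^^ n) x)) = L ((g ^^ n) x)" using L by blast
    then show ?case using Suc by simp
  qed
  then show ?thesis unfolding orb_def by auto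
qed

lemma image_filter: "(\<And>x. x \<in> X \<Longrightarrow> P (h x) = Q x) \<Longrightarrow> {y \<in> h ` X. P y} = h ` {x \<in> X. Q x}"
  by blast

section \<open>Removing two darts from a permutation: orbit count\<close>

lemma orbits_remove:
  assumes g: "maps g D" and dd: "d \<in> D" "d' \<in> D" "d \<noteq> d'"
    and g'1: "\<forall>y\<in>D - {d, d'}. g' y = sub_perm g (D - {d, d'}) y"
    and g'2: "\<forall>m\<in>markers g d d'. g' m = m"
    and L: "\<forall>y\<in>{d, d'}. L (g y) = L y"
  shows "card {Ob \<in> orbits g' (D - {d, d'} \<union> markers g d d'). \<exists>x\<in>Ob. L x \<in> K}
       = card {Ob \<in> orbits g D. \<exists>x\<in>Ob. L x \<in> K}"
proof -
  define D0 where "D0 = D - {d, d'}"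
  define Mk where "Mk = markers g d d'"
  define hh where "hh = (\<lambda>Ob. if Ob \<inter> D0 \<noteq> {} then Ob \<inter> D0 else Ob \<inter> Mk)"
  have D0: "D0 \<subseteq> D" unfolding D0_def by auto
  have Mk: "Mk \<subseteq> {d, d'}" unfolding Mk_def by (rule markers_sub)
  have rD0: "maps (sub_perm g D0) D0" using maps_sub_perm[OF g D0] .
  have orb1: "orb g' y = orb g y \<inter> D0" if y: "y \<in> D0" for y
  proof -
    have "orb g' y = orb (sub_perm g D0) y"
      using orb_cong[of D0 g' "sub_perm g D0" y] g'1 rD0 y unfolding D0_def maps_def by auto
    then show ?thesis using orb_sub_perm[OF g D0 y] by simp
  qed
  have orb2: "orb g' m = {m}" if "m \<in> Mk" for m
    using orb_fixed g'2 that unfolding Mk_def by metis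
  have img: "orbits g' (D0 \<union> Mk) = hh ` orbits g D"
  proof
    show "orbits g' (D0 \<union> Mk) \<subseteq> hh ` orbits g D"
    proof
      fix Ob assume "Ob \<in> orbits g' (D0 \<union> Mk)"
      then obtain y where y: "y \<in> D0 \<union> Mk" "Ob = orb g' y" by (auto elim: orbitsE)
      show "Ob \<in> hh ` orbits g D"
      proof (cases "y \<in> D0")
        case True
        then have "Ob = hh (orb g y)" using orb1 y orb_self[of y g] unfolding hh_def by auto
        moreover have "orb g y \<in> orbits g D" using True D0 by (auto intro: orbitsI)
        ultimately show ?thesis by auto
      next
        case False
        then have yM: "y \<in> Mk" using y by auto
        then have yD: "y \<in> D" using Mk dd by auto
        have "orb g y \<inter> D0 = {} \<and> orb g y \<inter> Mk = {y}"
          using markers_fixed_orbit[OF g dd] yM unfolding D0_def Mk_def by auto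
        then have "Ob = hh (orb g y)" using orb2 yM y unfolding hh_def by auto
        then show ?thesis using yD by (auto intro: orbitsI)
      qed
    qed
  next
    show "hh ` orbits g D \<subseteq> orbits g' (D0 \<union> Mk)"
    proof
      fix Ob' assume "Ob' \<in> hh ` orbits g D"
      then obtain x where x: "x \<in> D" "Ob' = hh (orb g x)" by (auto elim: orbitsE)
      show "Ob' \<in> orbits g' (D0 \<union> Mk)"
      proof (cases "orb g x \<inter> D0 = {}")
        case False
        then obtain y where y: "y \<in> orb g x" "y \<in> D0" by auto
        have "orb g y = orb g x" using orb_eq[OF g x(1) y(1)] .
        then have "Ob' = orb g' y" using x False orb1[OF y(2)] unfolding hh_def by auto
        then show ?thesis using y by (auto intro: orbitsI)
      next
        case True
        obtain m where m: "orb g x \<inter> Mk = {m}" "m \<in> orb g x"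
          using small_orbit[OF g dd x(1)] True unfolding D0_def Mk_def by auto
        then have "Ob' = {m}" using x True unfolding hh_def by auto
        then have "Ob' = orb g' m" using orb2 m by auto
        then show ?thesis using m by (auto intro: orbitsI)
      qed
    qed
  qed
  have inj: "inj_on hh (orbits g D)"
  proof (rule inj_onI)
    fix Ob1 Ob2 assume Ob1: "Ob1 \<in> orbits g D" and Ob2: "Ob2 \<in> orbits g D" and eq: "hh Ob1 = hh Ob2"
    obtain x1 where x1: "x1 \<in> D" "Ob1 = orb g x1" using Ob1 by (auto elim: orbitsE)
    obtain x2 where x2: "x2 \<in> D" "Ob2 = orb g x2" using Ob2 by (auto elim: orbitsE)
    have ne: "hh Ob1 \<noteq> {}" "hh Ob2 \<noteq> {}"
      using small_orbit[OF g dd x1(1)] small_orbit[OF g dd x2(1)] x1 x2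
      unfolding hh_def D0_def Mk_def by auto
    have "hh Ob1 \<subseteq> Ob1" "hh Ob2 \<subseteq> Ob2" unfolding hh_def by auto
    then have "Ob1 \<inter> Ob2 \<noteq> {}" using eq ne by auto
    then show "Ob1 = Ob2" using orb_disj_or_eq[OF g x1(1) x2(1)] x1 x2 by auto
  qed
  have Q: "(\<exists>x\<in>hh Ob. L x \<in> K) = (\<exists>x\<in>Ob. L x \<in> K)" if Ob: "Ob \<in> orbits g D" for Ob
  proof
    show "\<exists>x\<in>hh Ob. L x \<in> K \<Longrightarrow> \<exists>x\<in>Ob. L x \<in> K" unfolding hh_def by (auto split: if_splits)
  next
    assume "\<exists>x\<in>Ob. L x \<in> K"
    then obtain z where z: "z \<in> Ob" "L z \<in> K" by auto
    obtain x where x: "x \<in> D" "Ob = orb g x" using Ob by (auto elim: orbitsE)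
    have zD: "z \<in> D" using z x orb_subset[OF g] by auto
    have Oz: "Ob = orb g z" using orb_eq[OF g x(1)] z x by auto
    show "\<exists>x\<in>hh Ob. L x \<in> K"
    proof (cases "Ob \<inter> D0 = {}")
      case False
      then obtain n where "(g ^^ n) z \<in> D0" using Oz unfolding orb_def by auto
      then obtain n where n: "(g ^^ n) z \<in> D0" "L ((g ^^ n) z) = L z"
        using label_walk[OF g zD D0, of L] L unfolding D0_def by auto
      have h: "hh Ob = Ob \<inter> D0" using False unfolding hh_def by auto
      have "(g ^^ n) z \<in> hh Ob" unfolding h using n(1) Oz orb_funpow[of n g z] by auto
      then show ?thesis using n(2) z(2) by (intro bexI[of _ "(g ^^ n) z"]) simp_all
    next
      case True
      obtain m where m: "Ob \<inter> Mk = {m}" "m \<in> Ob"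
        using small_orbit[OF g dd zD] True Oz unfolding D0_def Mk_def by auto
      have "Ob \<subseteq> {d, d'}" using True Oz orb_subset[OF g zD] unfolding D0_def by auto
      then have sub': "orb g z \<subseteq> {d, d'}" using Oz by simp
      have all: "\<forall>y\<in>orb g z. L y = L z" by (rule small_orbit_label[OF sub' L])
      then have Lm: "L m = L z" using m(2) Oz by simp
      have "hh Ob = {m}" using True m(1) unfolding hh_def by simp
      then show ?thesis using Lm z(2) by simp
    qed
  qed
  have "{Ob \<in> orbits g' (D0 \<union> Mk). \<exists>x\<in>Ob. L x \<in> K} = hh ` {Ob \<in> orbits g D. \<exists>x\<in>Ob. L x \<in> K}"
    unfolding img by (rule image_filter) (rule Q)
  moreover have "inj_on hh {Ob \<in> orbits g D. \<exists>x\<in>Ob. L x \<in> K}"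
    by (rule inj_on_subset[OF inj]) auto
  ultimately have "card {Ob \<in> orbits g' (D0 \<union> Mk). \<exists>x\<in>Ob. L x \<in> K}
       = card {Ob \<in> orbits g D. \<exists>x\<in>Ob. L x \<in> K}" by (simp add: card_image)
  then show ?thesis unfolding D0_def Mk_def .
qed



definition restr_alp :: "('d \<Rightarrow> 'd) \<Rightarrow> 'd set \<Rightarrow> 'd \<Rightarrow> 'd" where
  "restr_alp a S x = (if x \<in> S then a x else x)"

lemma faces_orbits:
  assumes s: "maps s D"
    and a: "\<forall>x\<in>D. a x \<in> D \<and> a (a x) = x"
    and A: "A \<subseteq> {{x, a x} | x. x \<in> D}"
    and L: "\<forall>x\<in>D. L (s x) = L x"
  shows "card {Fc \<in> sub_faces D s a A. \<exists>x\<in>Fc. L x \<in> K}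
       = card {Ob \<in> orbits (s \<circ> restr_alp a (\<Union>A)) D. \<exists>x\<in>Ob. L x \<in> K}"
proof -
  define S where "S = \<Union>A"
  define aA where "aA = restr_alp a S"
  define g where "g = s \<circ> aA"
  have SD: "S \<subseteq> D" using A unfolding S_def using a by blast
  have Sa: "\<forall>x\<in>S. a x \<in> S"
  proof
    fix x assume "x \<in> S"
    then obtain y where y: "y \<in> D" "x \<in> {y, a y}" "{y, a y} \<in> A" using A unfolding S_def by blast
    then have "a x \<in> {y, a y}" using a by auto
    then show "a x \<in> S" using y(3) unfolding S_def by blast
  qed
  have fin: "finite D" using s maps_def by blast
  have aAD: "\<forall>x\<in>D. aA x \<in> D" using a unfolding aA_def restr_alp_def by auto
  have aAaA: "\<forall>x\<in>D. aA (aA x) = x" using a Sa unfolding aA_def restr_alp_def by auto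
  have "inj_on aA D"
  proof (rule inj_onI)
    fix u v assume "u \<in> D" "v \<in> D" "aA u = aA v"
    then show "u = v" using aAaA by metis
  qed
  then have maA: "maps aA D" using fin aAD unfolding maps_def by auto
  have g: "maps g D" unfolding g_def by (rule maps_comp[OF s maA])
  have rS: "maps (sub_perm g S) S" by (rule maps_sub_perm[OF g SD])
  have gS: "g y = s y" if "y \<notin> S" for y using that unfolding g_def aA_def restr_alp_def by simp
  have r_eq: "(sub_perm s S \<circ> a) x = sub_perm g S x" if x: "x \<in> S" for x
  proof -
    have "sub_perm g S x = sub_perm s S (aA x)" unfolding g_def
      by (rule sub_perm_comp[OF s SD x]) (use Sa in \<open>auto simp: aA_def restr_alp_def\<close>)
    then show ?thesis using x unfolding aA_def restr_alp_def by simp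
  qed
  have orbS: "orb (sub_perm s S \<circ> a) x = orb g x \<inter> S" if x: "x \<in> S" for x
  proof -
    have "orb (sub_perm s S \<circ> a) x = orb (sub_perm g S) x"
    proof (rule orb_cong[of S])
      have rS': "\<forall>y\<in>S. sub_perm g S y \<in> S" using rS unfolding maps_def by auto
      show "\<forall>y\<in>S. (sub_perm s S \<circ> a) y = sub_perm g S y" using r_eq by auto
      show "\<forall>y\<in>S. (sub_perm s S \<circ> a) y \<in> S" using r_eq rS' by auto
      show "x \<in> S" by (rule x)
    qed
    then show ?thesis using orb_sub_perm[OF g SD x] by simp
  qed
  have orbD1: "orb g x = orb s x" if "orb s x \<inter> S = {}" for x
    by (rule orb_cong2) (use that gS in blast)
  have orbD2: "orb s x = orb g x" if "orb g x \<inter> S = {}" for x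
  proof (rule orb_cong2, rule ballI)
    fix y assume "y \<in> orb g x"
    then have "y \<notin> S" using that by auto
    then show "s y = g y" using gS by simp
  qed
  have SF: "sub_faces D s a A = orbits (sub_perm s S \<circ> a) S \<union> {orb s x | x. x \<in> D \<and> orb s x \<inter> S = {}}"
    unfolding sub_faces_def S_def Let_def by simp
  define hh where "hh = (\<lambda>Ob. if Ob \<inter> S \<noteq> {} then Ob \<inter> S else Ob)"
  have img: "sub_faces D s a A = hh ` orbits g D"
  proof
    show "sub_faces D s a A \<subseteq> hh ` orbits g D"
    proof
      fix F assume "F \<in> sub_faces D s a A"
      then consider (a) x where "x \<in> S" "F = orb (sub_perm s S \<circ> a) x"
        | (b) x where "x \<in> D" "orb s x \<inter> S = {}" "F = orb s x"
        unfolding SF orbits_def by blast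
      then show "F \<in> hh ` orbits g D"
      proof cases
        case a
        then have "F = hh (orb g x)" using orbS orb_self[of x g] unfolding hh_def by auto
        moreover have "orb g x \<in> orbits g D" using a SD by (auto intro: orbitsI)
        ultimately show ?thesis by blast
      next
        case b
        then have "F = hh (orb g x)" using orbD1 unfolding hh_def by auto
        moreover have "orb g x \<in> orbits g D" using b by (auto intro: orbitsI)
        ultimately show ?thesis by blast
      qed
    qed
  next
    show "hh ` orbits g D \<subseteq> sub_faces D s a A"
    proof
      fix F assume "F \<in> hh ` orbits g D"
      then obtain x where x: "x \<in> D" "F = hh (orb g x)" by (auto elim: orbitsE)
      show "F \<in> sub_faces D s a A"
      proof (cases "orb g x \<inter> S = {}")
        case True
        then have "F = orb s x" using x orbD2 unfolding hh_def by auto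
        moreover have "orb s x \<inter> S = {}" using orbD2[OF True] True by simp
        ultimately show ?thesis unfolding SF using x(1) by blast
      next
        case False
        then obtain y where y: "y \<in> orb g x" "y \<in> S" by auto
        have "orb g y = orb g x" by (rule orb_eq[OF g x(1) y(1)])
        then have "F = orb (sub_perm s S \<circ> a) y" using x False orbS[OF y(2)] unfolding hh_def by auto
        then show ?thesis unfolding SF orbits_def using y by auto
      qed
    qed
  qed
  have inj: "inj_on hh (orbits g D)"
  proof (rule inj_onI)
    fix O1 O2 assume O1: "O1 \<in> orbits g D" and O2: "O2 \<in> orbits g D" and eq: "hh O1 = hh O2"
    obtain x1 where x1: "x1 \<in> D" "O1 = orb g x1" using O1 by (auto elim: orbitsE)
    obtain x2 where x2: "x2 \<in> D" "O2 = orb g x2" using O2 by (auto elim: orbitsE)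
    have ne: "hh O1 \<noteq> {}" "hh O2 \<noteq> {}"
      using x1 x2 orb_self[of x1 g] orb_self[of x2 g] unfolding hh_def by auto
    have "hh O1 \<subseteq> O1" "hh O2 \<subseteq> O2" unfolding hh_def by auto
    then have "O1 \<inter> O2 \<noteq> {}" using eq ne by auto
    then show "O1 = O2" using orb_disj_or_eq[OF g x1(1) x2(1)] x1 x2 by auto
  qed
  have Q: "(\<exists>x\<in>hh Ob. L x \<in> K) = (\<exists>x\<in>Ob. L x \<in> K)" if Ob: "Ob \<in> orbits g D" for Ob
  proof
    show "\<exists>x\<in>hh Ob. L x \<in> K \<Longrightarrow> \<exists>x\<in>Ob. L x \<in> K" unfolding hh_def by (auto split: if_splits)
  next
    assume "\<exists>x\<in>Ob. L x \<in> K"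
    then obtain z where z: "z \<in> Ob" "L z \<in> K" by auto
    obtain x where x: "x \<in> D" "Ob = orb g x" using Ob by (auto elim: orbitsE)
    have zD: "z \<in> D" using z x orb_subset[OF g] by auto
    have Oz: "Ob = orb g z" using orb_eq[OF g x(1)] z x by auto
    show "\<exists>x\<in>hh Ob. L x \<in> K"
    proof (cases "Ob \<inter> S = {}")
      case False
      then obtain n where "(g ^^ n) z \<in> S" using Oz unfolding orb_def by auto
      moreover have "\<forall>y\<in>D - S. L (g y) = L y" using gS L by auto
      ultimately obtain n where n: "(g ^^ n) z \<in> S" "L ((g ^^ n) z) = L z"
        using label_walk[OF g zD SD, of L] by blast
      have h: "hh Ob = Ob \<inter> S" using False unfolding hh_def by auto
      have "(g ^^ n) z \<in> hh Ob" unfolding h using n(1) Oz orb_funpow[of n g z] by auto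
      then show ?thesis using n(2) z(2) by (intro bexI[of _ "(g ^^ n) z"]) simp_all
    next
      case True
      then have "hh Ob = Ob" unfolding hh_def by simp
      then show ?thesis using z by (intro bexI[of _ z]) simp_all
    qed
  qed
  have "{Fc \<in> sub_faces D s a A. \<exists>x\<in>Fc. L x \<in> K} = hh ` {Ob \<in> orbits g D. \<exists>x\<in>Ob. L x \<in> K}"
    unfolding img by (rule image_filter) (rule Q)
  moreover have "inj_on hh {Ob \<in> orbits g D. \<exists>x\<in>Ob. L x \<in> K}"
    by (rule inj_on_subset[OF inj]) auto
  ultimately have "card {Fc \<in> sub_faces D s a A. \<exists>x\<in>Fc. L x \<in> K}
       = card {Ob \<in> orbits g D. \<exists>x\<in>Ob. L x \<in> K}" by (simp add: card_image)
  then show ?thesis unfolding g_def aA_def S_def .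
qed



section \<open>Connected components of a graph given by a symmetric relation\<close>

definition cc :: "'b set \<Rightarrow> ('b \<times> 'b) set \<Rightarrow> 'b \<Rightarrow> 'b set" where
  "cc B E b = {b' \<in> B. (b, b') \<in> E\<^sup>*}"

lemma sym_rtr: "sym E \<Longrightarrow> (x, y) \<in> E\<^sup>* \<Longrightarrow> (y, x) \<in> E\<^sup>*"
  using sym_rtrancl[of E] unfolding sym_def by blast

lemma cc_self: "b \<in> B \<Longrightarrow> b \<in> cc B E b"
  unfolding cc_def by auto

lemma cc_eq:
  assumes "sym E" "c \<in> cc B E b"
  shows "cc B E c = cc B E b"
proof -
  have bc: "(b, c) \<in> E\<^sup>*" using assms(2) unfolding cc_def by auto
  then have cb: "(c, b) \<in> E\<^sup>*" using sym_rtr[OF assms(1)] by blast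
  show ?thesis unfolding cc_def using bc cb rtrancl_trans[of _ _ E] by blast
qed

lemma cc_rep:
  assumes "sym E" "K \<in> cc B E ` B" "r \<in> K"
  shows "K = cc B E r"
  using assms cc_eq by fastforce

lemma rtr_add_edge:
  assumes "(b, c) \<in> (E \<union> {(p, q), (q, p)})\<^sup>*"
  shows "(b, c) \<in> E\<^sup>* \<or> ((b, p) \<in> E\<^sup>* \<and> (q, c) \<in> E\<^sup>*) \<or> ((b, q) \<in> E\<^sup>* \<and> (p, c) \<in> E\<^sup>*)"
  using assms
proof (induction rule: rtrancl_induct)
  case base
  then show ?case by simp
next
  case (step y z)
  show ?case
  proof (cases "(y, z) \<in> E")
    case True
    then show ?thesis using step.IH by (meson rtrancl.rtrancl_into_rtrancl)
  next
    case False
    then have yz: "(y, z) = (p, q) \<or> (y, z) = (q, p)" using step.hyps(2) by auto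
    then show ?thesis using step.IH by auto
  qed
qed

definition symrel :: "('e \<Rightarrow> 'b) \<Rightarrow> ('e \<Rightarrow> 'b) \<Rightarrow> 'e set \<Rightarrow> ('b \<times> 'b) set" where
  "symrel u v X = (\<lambda>x. (u x, v x)) ` X \<union> (\<lambda>x. (v x, u x)) ` X"

lemma sym_symrel: "sym (symrel u v X)"
  unfolding symrel_def sym_def by auto

lemma symrel_insert: "symrel u v (insert x X) = symrel u v X \<union> {(u x, v x), (v x, u x)}"
  unfolding symrel_def by auto

lemma card_cc_step:
  assumes fin: "finite B" and sE: "sym E" and p: "p \<in> B" and q: "q \<in> B"
  shows "card (cc B E ` B) \<le> card (cc B (E \<union> {(p, q), (q, p)}) ` B) + 1"
proof -
  define E' where "E' = E \<union> {(p, q), (q, p)}"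
  have sE': "sym E'" using sE unfolding E'_def sym_def by auto
  define C where "C = cc B E ` B"
  define C' where "C' = cc B E' ` B"
  define Kq where "Kq = cc B E q"
  define f where "f = (\<lambda>K. cc B E' (SOME r. r \<in> K))"
  have ne: "K \<noteq> {}" if KC: "K \<in> C" for K
  proof -
    obtain b where "b \<in> B" "K = cc B E b" using KC unfolding C_def by auto
    then show ?thesis using cc_self[of b B E] by auto
  qed
  have rep: "(SOME r. r \<in> K) \<in> K" if "K \<in> C" for K using ne[OF that] by (simp add: some_in_eq)
  have KB: "K \<subseteq> B" if "K \<in> C" for K using that unfolding C_def cc_def by auto
  have inj: "inj_on f (C - {Kq})"
  proof (rule inj_onI)
    fix K1 K2 assume K1: "K1 \<in> C - {Kq}" and K2: "K2 \<in> C - {Kq}" and eq: "f K1 = f K2"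
    define r1 where "r1 = (SOME r. r \<in> K1)"
    define r2 where "r2 = (SOME r. r \<in> K2)"
    have r1: "r1 \<in> K1" "r1 \<in> B" using rep KB K1 unfolding r1_def by auto
    have r2: "r2 \<in> K2" "r2 \<in> B" using rep KB K2 unfolding r2_def by auto
    have K1r: "K1 = cc B E r1" using cc_rep[OF sE _ r1(1)] K1 unfolding C_def by auto
    have K2r: "K2 = cc B E r2" using cc_rep[OF sE _ r2(1)] K2 unfolding C_def by auto
    have "r2 \<in> cc B E' r1" using eq cc_self[OF r2(2), of E'] unfolding f_def r1_def r2_def by simp
    then have "(r1, r2) \<in> E'\<^sup>*" unfolding cc_def by auto
    then have c: "(r1, r2) \<in> E\<^sup>* \<or> ((r1, p) \<in> E\<^sup>* \<and> (q, r2) \<in> E\<^sup>*) \<or> ((r1, q) \<in> E\<^sup>* \<and> (p, r2) \<in> E\<^sup>*)"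
      unfolding E'_def by (rule rtr_add_edge)
    show "K1 = K2"
    proof -
      { assume "(r1, r2) \<in> E\<^sup>*"
        then have "r2 \<in> cc B E r1" using r2 unfolding cc_def by auto
        then have ?thesis using K1r K2r cc_eq[OF sE] by metis }
      moreover
      { assume "(q, r2) \<in> E\<^sup>*"
        then have "r2 \<in> Kq" using r2 unfolding Kq_def cc_def by auto
        then have "K2 = Kq" using K2r cc_eq[OF sE] unfolding Kq_def by metis
        then have False using K2 by auto }
      moreover
      { assume "(r1, q) \<in> E\<^sup>*"
        then have "(q, r1) \<in> E\<^sup>*" using sym_rtr[OF sE] by blast
        then have "r1 \<in> Kq" using r1 unfolding Kq_def cc_def by auto
        then have "K1 = Kq" using K1r cc_eq[OF sE] unfolding Kq_def by metis
        then have False using K1 by auto }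
      ultimately show ?thesis using c by blast
    qed
  qed
  have sub: "f ` (C - {Kq}) \<subseteq> C'"
  proof
    fix y assume "y \<in> f ` (C - {Kq})"
    then obtain K where K: "K \<in> C" "y = f K" by auto
    then have "(SOME r. r \<in> K) \<in> B" using rep[OF K(1)] KB[OF K(1)] by auto
    then show "y \<in> C'" using K unfolding f_def C'_def by auto
  qed
  have finC': "finite C'" using fin unfolding C'_def by simp
  have finC: "finite C" using fin unfolding C_def by simp
  have "card (C - {Kq}) \<le> card C'" using card_inj_on_le[OF inj sub finC'] .
  moreover have "card C \<le> card (C - {Kq}) + 1"
  proof (cases "Kq \<in> C")
    case True
    then show ?thesis using card_Diff_singleton[OF True] finC
      by (metis Suc_eq_plus1 card.remove order_refl True)
  next
    case False
    then show ?thesis by simp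
  qed
  ultimately show ?thesis unfolding C_def C'_def E'_def by simp
qed

lemma cc_empty: "b \<in> B \<Longrightarrow> cc B {} b = {b}"
  unfolding cc_def by auto

lemma rank_ineq:
  assumes fin: "finite B" and finX: "finite X" and uv: "\<forall>x\<in>X. u x \<in> B \<and> v x \<in> B"
  shows "card B \<le> card X + card (cc B (symrel u v X) ` B)"
  using finX uv
proof (induction X rule: finite_induct)
  case empty
  have e: "symrel u v {} = {}" unfolding symrel_def by simp
  have "cc B (symrel u v {}) ` B = (\<lambda>b. {b}) ` B"
    unfolding e by (rule image_cong) (auto simp: cc_empty)
  moreover have "card ((\<lambda>b. {b}) ` B) = card B" by (rule card_image) (auto simp: inj_on_def)
  ultimately show ?case by simp
next
  case (insert x X)
  have IH: "card B \<le> card X + card (cc B (symrel u v X) ` B)" using insert by auto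
  have "card (cc B (symrel u v X) ` B) \<le> card (cc B (symrel u v (insert x X)) ` B) + 1"
    unfolding symrel_insert using card_cc_step[OF fin sym_symrel] insert.prems by auto
  then show ?case using IH insert.hyps by simp
qed



lemma maps_union_fixed:
  assumes r: "maps r D0" and disj: "D0 \<inter> Mk = {}" and fin: "finite Mk"
    and g1: "\<forall>y\<in>D0. g y = r y" and g2: "\<forall>m\<in>Mk. g m = m"
  shows "maps g (D0 \<union> Mk)"
proof -
  have rin: "\<forall>y\<in>D0. r y \<in> D0" and ir: "inj_on r D0" and f0: "finite D0" using r unfolding maps_def by auto
  have "inj_on g (D0 \<union> Mk)"
  proof (rule inj_onI)
    fix x y assume x: "x \<in> D0 \<union> Mk" and y: "y \<in> D0 \<union> Mk" and eq: "g x = g y"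
    show "x = y"
    proof (cases "x \<in> D0")
      case True
      show ?thesis
      proof (cases "y \<in> D0")
        case True
        then show ?thesis using \<open>x \<in> D0\<close> eq g1 ir by (metis inj_onD)
      next
        case False
        then have "y \<in> Mk" using y by auto
        then show ?thesis using \<open>x \<in> D0\<close> eq g1 g2 rin disj by force
      qed
    next
      case False
      then have xM: "x \<in> Mk" using x by auto
      show ?thesis
      proof (cases "y \<in> D0")
        case True
        then show ?thesis using xM eq g1 g2 rin disj by force
      next
        case False
        then show ?thesis using xM y eq g2 by auto
      qed
    qed
  qed
  then show ?thesis unfolding maps_def using f0 fin g1 g2 rin by auto
qed

lemma sub_faces_subset:
  assumes s: "maps s D" and SD: "\<Union>A \<subseteq> D" and aS: "\<forall>x\<in>\<Union>A. a x \<in> \<Union>A"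
    and F: "Fc \<in> sub_faces D s a A"
  shows "Fc \<subseteq> D"
proof -
  define S where "S = \<Union>A"
  have SD': "S \<subseteq> D" using SD unfolding S_def .
  have cl: "\<forall>y\<in>S. (sub_perm s S \<circ> a) y \<in> S"
    using sub_perm_in[OF s SD'] aS unfolding S_def by auto
  from F consider (a) x where "x \<in> S" "Fc = orb (sub_perm s S \<circ> a) x"
    | (b) x where "x \<in> D" "Fc = orb s x"
    unfolding sub_faces_def S_def Let_def orbits_def by blast
  then show ?thesis
  proof cases
    case a
    have "orb (sub_perm s S \<circ> a) x \<subseteq> S" by (rule orb_closed[OF cl a(1)])
    then show ?thesis using a(2) SD' by blast
  next
    case b then show ?thesis using orb_subset[OF s b(1)] by auto
  qed
qed

lemma faces_transfer:
  assumes s: "maps s D" and a: "\<forall>x\<in>D. a x \<in> D \<and> a (a x) = x"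
    and A: "A \<subseteq> {{x, a x} | x. x \<in> D}" and L: "\<forall>x\<in>D. L (s x) = L x"
    and dd: "d \<in> D" "d' \<in> D" "d \<noteq> d'"
    and D': "D' = D - {d, d'} \<union> markers (s \<circ> restr_alp a (\<Union>A)) d d'"
    and a': "\<forall>x\<in>D'. a' x \<in> D' \<and> a' (a' x) = x"
    and A': "A' \<subseteq> {{x, a' x} | x. x \<in> D'}" and L': "\<forall>x\<in>D'. L (s' x) = L x"
    and g'1: "\<forall>y\<in>D - {d, d'}. s' (restr_alp a' (\<Union>A') y) = sub_perm (s \<circ> restr_alp a (\<Union>A)) (D - {d, d'}) y"
    and g'2: "\<forall>m\<in>markers (s \<circ> restr_alp a (\<Union>A)) d d'. s' (restr_alp a' (\<Union>A') m) = m"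
    and Ld: "\<forall>y\<in>{d, d'}. L (s (restr_alp a (\<Union>A) y)) = L y"
  shows "card {Fc \<in> sub_faces D' s' a' A'. \<exists>x\<in>Fc. L x \<in> K}
       = card {Fc \<in> sub_faces D s a A. \<exists>x\<in>Fc. L x \<in> K}"
proof -
  define g where "g = s \<circ> restr_alp a (\<Union>A)"
  define aA' where "aA' = restr_alp a' (\<Union>A')"
  define g' where "g' = s' \<circ> aA'"
  define D0 where "D0 = D - {d, d'}"
  define Mk where "Mk = markers g d d'"
  have fin: "finite D" using s maps_def by blast
  have SD: "\<Union>A \<subseteq> D" using A a by blast
  have Sa: "\<forall>x\<in>\<Union>A. a x \<in> \<Union>A"
  proof
    fix x assume "x \<in> \<Union>A"
    then obtain y where y: "y \<in> D" "x \<in> {y, a y}" "{y, a y} \<in> A" using A by blast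
    then have "a x \<in> {y, a y}" using a by auto
    then show "a x \<in> \<Union>A" using y(3) by blast
  qed
  have S'D: "\<Union>A' \<subseteq> D'" using A' a' by blast
  have S'a: "\<forall>x\<in>\<Union>A'. a' x \<in> \<Union>A'"
  proof
    fix x assume "x \<in> \<Union>A'"
    then obtain y where y: "y \<in> D'" "x \<in> {y, a' y}" "{y, a' y} \<in> A'" using A' by blast
    then have "a' x \<in> {y, a' y}" using a' by auto
    then show "a' x \<in> \<Union>A'" using y(3) by blast
  qed
  have aAin: "\<forall>x\<in>D. restr_alp a (\<Union>A) x \<in> D" using a unfolding restr_alp_def by auto
  have aAinv: "\<forall>x\<in>D. restr_alp a (\<Union>A) (restr_alp a (\<Union>A) x) = x"
    using a Sa unfolding restr_alp_def by auto
  have "inj_on (restr_alp a (\<Union>A)) D" by (rule inj_onI) (metis aAinv)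
  then have maA: "maps (restr_alp a (\<Union>A)) D" using fin aAin unfolding maps_def by auto
  have g: "maps g D" unfolding g_def by (rule maps_comp[OF s maA])
  have D0D: "D0 \<subseteq> D" unfolding D0_def by auto
  have r: "maps (sub_perm g D0) D0" by (rule maps_sub_perm[OF g D0D])
  have Mk: "Mk \<subseteq> {d, d'}" unfolding Mk_def by (rule markers_sub)
  have disj: "D0 \<inter> Mk = {}" using Mk unfolding D0_def by auto
  have D'eq: "D' = D0 \<union> Mk" unfolding D' D0_def Mk_def g_def by simp
  have g': "maps g' D'" unfolding D'eq
    by (rule maps_union_fixed[OF r disj]) (use Mk g'1 g'2 in \<open>auto simp: g'_def aA'_def D0_def Mk_def g_def intro: finite_subset\<close>)
  have fin': "finite D'" using g' maps_def by blast
  have aA'in: "\<forall>x\<in>D'. aA' x \<in> D'" using a' unfolding aA'_def restr_alp_def by auto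
  have aA'inv: "\<forall>x\<in>D'. aA' (aA' x) = x" using a' S'a unfolding aA'_def restr_alp_def by auto
  have "inj_on aA' D'" by (rule inj_onI) (metis aA'inv)
  then have maA': "maps aA' D'" using fin' aA'in unfolding maps_def by auto
  have s'eq: "\<forall>x\<in>D'. (g' \<circ> aA') x = s' x" using aA'inv unfolding g'_def by auto
  have s': "maps s' D'" using maps_cong[OF maps_comp[OF g' maA'] s'eq] .
  have c1: "card {Fc \<in> sub_faces D s a A. \<exists>x\<in>Fc. L x \<in> K} = card {Ob \<in> orbits g D. \<exists>x\<in>Ob. L x \<in> K}"
    unfolding g_def by (rule faces_orbits[OF s a A L])
  have c2: "card {Fc \<in> sub_faces D' s' a' A'. \<exists>x\<in>Fc. L x \<in> K} = card {Ob \<in> orbits g' D'. \<exists>x\<in>Ob. L x \<in> K}"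
    unfolding g'_def aA'_def by (rule faces_orbits[OF s' a' A' L'])
  have c3: "card {Ob \<in> orbits g' (D - {d, d'} \<union> markers g d d'). \<exists>x\<in>Ob. L x \<in> K}
       = card {Ob \<in> orbits g D. \<exists>x\<in>Ob. L x \<in> K}"
    by (rule orbits_remove[OF g dd]) (use g'1 g'2 Ld in \<open>auto simp: g'_def aA'_def g_def\<close>)
  show ?thesis using c1 c2 c3 unfolding D' g_def by simp
qed



definition Rs :: "('d \<Rightarrow> 'b) \<Rightarrow> ('d \<Rightarrow> 'd) \<Rightarrow> 'd set \<Rightarrow> ('b \<times> 'b) set" where
  "Rs lab a S = (\<lambda>x. (lab x, lab (a x))) ` S \<union> (\<lambda>x. (lab (a x), lab x)) ` S"

lemma sym_Rs: "sym (Rs lab a S)"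
  unfolding Rs_def sym_def by blast

lemma comp_cc: "comp D a lab A = cc (blocks D lab) (Rs lab a (\<Union>A))"
proof
  fix b
  have "{(lab x, lab (a x)) | x. x \<in> \<Union>A}\<inverse> = (\<lambda>x. (lab (a x), lab x)) ` \<Union>A" by blast
  moreover have "{(lab x, lab (a x)) | x. x \<in> \<Union>A} = (\<lambda>x. (lab x, lab (a x))) ` \<Union>A" by blast
  ultimately show "comp D a lab A b = cc (blocks D lab) (Rs lab a (\<Union>A)) b"
    unfolding comp_def cc_def Rs_def Let_def by simp
qed

lemma comps_cc: "comps D a lab A = cc (blocks D lab) (Rs lab a (\<Union>A)) ` blocks D lab"
  unfolding comps_def comp_cc ..

lemma Rs_cong:
  assumes "\<forall>x\<in>S. lab x = lab' x \<and> lab (a x) = lab' (a' x)"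
  shows "Rs lab a S = Rs lab' a' S"
proof -
  have "(\<lambda>x. (lab x, lab (a x))) ` S = (\<lambda>x. (lab' x, lab' (a' x))) ` S"
    by (rule image_cong) (use assms in auto)
  moreover have "(\<lambda>x. (lab (a x), lab x)) ` S = (\<lambda>x. (lab' (a' x), lab' x)) ` S"
    by (rule image_cong) (use assms in auto)
  ultimately show ?thesis unfolding Rs_def by simp
qed

lemma edge_set_props:
  assumes a: "\<forall>x\<in>D. a x \<in> D \<and> a (a x) = x" and A: "A \<subseteq> {{x, a x} | x. x \<in> D}"
  shows "\<Union>A \<subseteq> D" "\<forall>x\<in>\<Union>A. a x \<in> \<Union>A" "finite D \<Longrightarrow> finite A"
proof -
  show "\<Union>A \<subseteq> D" using A a by blast
  show "\<forall>x\<in>\<Union>A. a x \<in> \<Union>A"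
  proof
    fix x assume "x \<in> \<Union>A"
    then obtain y where y: "y \<in> D" "x \<in> {y, a y}" "{y, a y} \<in> A" using A by blast
    then have "a x \<in> {y, a y}" using a by auto
    then show "a x \<in> \<Union>A" using y(3) by blast
  qed
  assume "finite D"
  moreover have "A \<subseteq> (\<lambda>x. {x, a x}) ` D" using A by blast
  ultimately show "finite A" using finite_subset by blast
qed

lemma comps_rank:
  assumes fin: "finite D" and a: "\<forall>x\<in>D. a x \<in> D \<and> a (a x) = x" and A: "A \<subseteq> {{x, a x} | x. x \<in> D}"
  shows "card (blocks D lab) \<le> card A + card (comps D a lab A)"
proof -
  define u where "u = (\<lambda>ed. lab (SOME x. x \<in> ed))"
  define v where "v = (\<lambda>ed. lab (a (SOME x. x \<in> ed)))"
  have finA: "finite A" using edge_set_props(3)[OF a A fin] .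
  have some: "(SOME x. x \<in> ed) \<in> ed" if edA: "ed \<in> A" for ed
  proof -
    obtain y where "ed = {y, a y}" using edA A by blast
    then show ?thesis by (metis insertI1 someI)
  qed
  have uv: "\<forall>ed\<in>A. u ed \<in> blocks D lab \<and> v ed \<in> blocks D lab"
  proof
    fix ed assume ed: "ed \<in> A"
    obtain y where y: "y \<in> D" "ed = {y, a y}" using ed A by blast
    have "(SOME x. x \<in> ed) \<in> D" "a (SOME x. x \<in> ed) \<in> D" using some[OF ed] y a by auto
    then show "u ed \<in> blocks D lab \<and> v ed \<in> blocks D lab" unfolding u_def v_def blocks_def by auto
  qed
  have eq: "Rs lab a (\<Union>A) = symrel u v A"
  proof
    show "Rs lab a (\<Union>A) \<subseteq> symrel u v A"
    proof
      fix pr assume "pr \<in> Rs lab a (\<Union>A)"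
      then obtain x where x: "x \<in> \<Union>A" "pr = (lab x, lab (a x)) \<or> pr = (lab (a x), lab x)"
        unfolding Rs_def by blast
      then obtain ed where ed: "ed \<in> A" "x \<in> ed" by blast
      obtain y where y: "y \<in> D" "ed = {y, a y}" using ed A by blast
      have ay: "a (a y) = y" using a y by auto
      define r where "r = (SOME x. x \<in> ed)"
      have r: "r \<in> ed" using some[OF ed(1)] unfolding r_def .
      have "(lab x, lab (a x)) = (u ed, v ed) \<or> (lab x, lab (a x)) = (v ed, u ed)"
        using r ed(2) y ay unfolding u_def v_def r_def[symmetric] by auto
      then show "pr \<in> symrel u v A" using x(2) ed(1) unfolding symrel_def by auto
    qed
  next
    show "symrel u v A \<subseteq> Rs lab a (\<Union>A)"
      unfolding symrel_def Rs_def u_def v_def using some by blast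
  qed
  show ?thesis using rank_ineq[OF _ finA uv] fin unfolding comps_cc eq blocks_def by simp
qed

section \<open>Merging two blocks along an edge\<close>

lemma merge_key:
  assumes "(lab d, lab (a d)) \<in> E"
    and "m = (\<lambda>b. if b = lab (a d) then lab d else b)"
    and "sym E"
    and "m u = m w"
  shows "(u, w) \<in> E\<^sup>*"
proof -
  have "(lab d, lab (a d)) \<in> E\<^sup>*" "(lab (a d), lab d) \<in> E\<^sup>*" using assms(1,3) unfolding sym_def by auto
  then show ?thesis using assms(2,4) by (auto split: if_splits)
qed

lemma merge_fwd:
  assumes E: "E = Rs lab a S" and E': "E' = Rs (m \<circ> lab) a (S - {d, a d})"
    and m: "m = (\<lambda>b. if b = lab (a d) then lab d else b)" and aa: "a (a d) = d"
    and uv: "(u, v) \<in> E\<^sup>*"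
  shows "(m u, m v) \<in> E'\<^sup>*"
  using uv
proof (induction rule: rtrancl_induct)
  case base then show ?case by simp
next
  case (step y z)
  from step.hyps(2) obtain x where x: "x \<in> S" "(y, z) = (lab x, lab (a x)) \<or> (y, z) = (lab (a x), lab x)"
    unfolding E Rs_def by blast
  show ?case
  proof (cases "x \<in> {d, a d}")
    case True
    then have "m y = m z" using x aa m by auto
    then show ?thesis using step.IH by simp
  next
    case False
    then have "(m y, m z) \<in> E'" using x unfolding E' Rs_def by auto
    then show ?thesis using step.IH by (meson rtrancl.rtrancl_into_rtrancl)
  qed
qed

lemma merge_bwd:
  assumes E: "E = Rs lab a S" and E': "E' = Rs (m \<circ> lab) a (S - {d, a d})"
    and m: "m = (\<lambda>b. if b = lab (a d) then lab d else b)" and dS: "d \<in> S"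
    and pq: "(p, q) \<in> E'\<^sup>*"
  shows "m u = p \<Longrightarrow> \<exists>v. m v = q \<and> (u, v) \<in> E\<^sup>*"
  using pq
proof (induction rule: rtrancl_induct)
  case base then show ?case by auto
next
  case (step y z)
  obtain v where v: "m v = y" "(u, v) \<in> E\<^sup>*" using step.IH step.prems by auto
  from step.hyps(2) obtain x where x: "x \<in> S" "(y, z) = (m (lab x), m (lab (a x))) \<or> (y, z) = (m (lab (a x)), m (lab x))"
    unfolding E' Rs_def by auto
  have dE: "(lab d, lab (a d)) \<in> E" using dS unfolding E Rs_def by auto
  have sE: "sym E" unfolding E by (rule sym_Rs)
  show ?case
  proof (cases "(y, z) = (m (lab x), m (lab (a x)))")
    case True
    then have "(v, lab x) \<in> E\<^sup>*" using merge_key[of lab d a E m, OF dE m sE] v(1) by auto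
    moreover have "(lab x, lab (a x)) \<in> E" using x(1) unfolding E Rs_def by auto
    ultimately have "(u, lab (a x)) \<in> E\<^sup>*" using v(2) by (meson rtrancl.rtrancl_into_rtrancl rtrancl_trans)
    then show ?thesis using True by auto
  next
    case False
    then have yz: "(y, z) = (m (lab (a x)), m (lab x))" using x(2) by auto
    then have "(v, lab (a x)) \<in> E\<^sup>*" using merge_key[of lab d a E m, OF dE m sE] v(1) by auto
    moreover have "(lab (a x), lab x) \<in> E" using x(1) unfolding E Rs_def by auto
    ultimately have "(u, lab x) \<in> E\<^sup>*" using v(2) by (meson rtrancl.rtrancl_into_rtrancl rtrancl_trans)
    then show ?thesis using yz by auto
  qed
qed

lemma merge_cc:
  assumes E: "E = Rs lab a S" and E': "E' = Rs (m \<circ> lab) a (S - {d, a d})"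
    and m: "m = (\<lambda>b. if b = lab (a d) then lab d else b)" and dS: "d \<in> S" and aa: "a (a d) = d"
    and b: "b \<in> B"
  shows "cc (m ` B) E' (m b) = m ` cc B E b"
proof
  have dE: "(lab d, lab (a d)) \<in> E" using dS unfolding E Rs_def by auto
  have sE: "sym E" unfolding E by (rule sym_Rs)
  show "cc (m ` B) E' (m b) \<subseteq> m ` cc B E b"
  proof
    fix q assume "q \<in> cc (m ` B) E' (m b)"
    then obtain w where w: "w \<in> B" "q = m w" "(m b, q) \<in> E'\<^sup>*" unfolding cc_def by auto
    obtain v where v: "m v = q" "(b, v) \<in> E\<^sup>*" using merge_bwd[OF E E' m dS w(3)] by auto
    have "(v, w) \<in> E\<^sup>*" using merge_key[of lab d a E m, OF dE m sE] v(1) w(2) by auto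
    then have "(b, w) \<in> E\<^sup>*" using v(2) by (meson rtrancl_trans)
    then show "q \<in> m ` cc B E b" using w unfolding cc_def by auto
  qed
next
  show "m ` cc B E b \<subseteq> cc (m ` B) E' (m b)"
  proof
    fix q assume "q \<in> m ` cc B E b"
    then obtain c where c: "c \<in> B" "(b, c) \<in> E\<^sup>*" "q = m c" unfolding cc_def by auto
    have "(m b, m c) \<in> E'\<^sup>*" by (rule merge_fwd[OF E E' m aa c(2)])
    then show "q \<in> cc (m ` B) E' (m b)" using c unfolding cc_def by auto
  qed
qed



lemma blocks_keep:
  assumes g: "maps g D" and dd: "d \<in> D" "d' \<in> D" "d \<noteq> d'"
    and L: "\<forall>y\<in>{d, d'}. L (g y) = L y"
  shows "L ` (D - {d, d'} \<union> markers g d d') = L ` D"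
proof
  show "L ` (D - {d, d'} \<union> markers g d d') \<subseteq> L ` D"
    using markers_sub[of g d d'] dd by auto
next
  show "L ` D \<subseteq> L ` (D - {d, d'} \<union> markers g d d')"
  proof
    fix l assume "l \<in> L ` D"
    then obtain z where z: "z \<in> D" "l = L z" by auto
    show "l \<in> L ` (D - {d, d'} \<union> markers g d d')"
    proof (cases "z \<in> {d, d'}")
      case False
      then show ?thesis using z by auto
    next
      case True
      show ?thesis
      proof (cases "orb g z \<inter> (D - {d, d'}) = {}")
        case False
        then obtain n where "(g ^^ n) z \<in> D - {d, d'}" unfolding orb_def by auto
        then have "\<exists>n. (g ^^ n) z \<in> D - {d, d'}" by blast
        moreover have "\<forall>y\<in>D - (D - {d, d'}). L (g y) = L y" using L by auto
        ultimately obtain n where n: "(g ^^ n) z \<in> D - {d, d'}" "L ((g ^^ n) z) = L z"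
          using label_walk[OF g z(1), of "D - {d, d'}" L] by blast
        then show ?thesis using z by (metis UnI1 image_eqI)
      next
        case True
        obtain m where m: "orb g z \<inter> markers g d d' = {m}" "m \<in> orb g z"
          using small_orbit[OF g dd z(1) True] by auto
        have sub: "orb g z \<subseteq> {d, d'}" using True orb_subset[OF g z(1)] by auto
        have "L m = L z" using small_orbit_label[OF sub L] m(2) by auto
        moreover have "m \<in> markers g d d'" using m(1) by auto
        ultimately show ?thesis using z by (metis UnI2 image_eqI)
      qed
    qed
  qed
qed

lemma edge_meet:
  assumes a: "\<forall>x\<in>D. a x \<in> D \<and> a (a x) = x" and y: "y \<in> D" and d: "d \<in> D"
    and m: "{y, a y} \<inter> {d, a d} \<noteq> {}"
  shows "{y, a y} = {d, a d}"
proof -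
  have add: "a (a d) = d" and ayy: "a (a y) = y" using a d y by auto
  from m consider "d = y" | "d = a y" | "a d = y" | "a d = a y" by auto
  then show ?thesis
  proof cases
    case 1 then show ?thesis by simp
  next
    case 2 then have "a d = y" using ayy by simp
    then show ?thesis using 2 by auto
  next
    case 3 then have "a y = d" using add by simp
    then show ?thesis using 3 by auto
  next
    case 4 then have "d = y" using add ayy by metis
    then show ?thesis by simp
  qed
qed

lemma edge_not_in:
  assumes a: "\<forall>x\<in>D. a x \<in> D \<and> a (a x) = x" and A: "A \<subseteq> {{x, a x} | x. x \<in> D}"
    and d: "d \<in> D" and eA: "{d, a d} \<notin> A"
  shows "d \<notin> \<Union>A" "a d \<notin> \<Union>A"
proof -
  have "ed \<inter> {d, a d} = {}" if ed: "ed \<in> A" for ed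
  proof -
    obtain y where y: "y \<in> D" "ed = {y, a y}" using ed A by blast
    have "ed \<noteq> {d, a d}" using ed eA by auto
    then show ?thesis using edge_meet[OF a y(1) d] y(2) by auto
  qed
  then show "d \<notin> \<Union>A" "a d \<notin> \<Union>A" by auto
qed

lemma edge_in_disj:
  assumes a: "\<forall>x\<in>D. a x \<in> D \<and> a (a x) = x" and A: "A \<subseteq> {{x, a x} | x. x \<in> D}"
    and d: "d \<in> D" and eA: "{d, a d} \<in> A"
  shows "\<Union>(A - {{d, a d}}) = \<Union>A - {d, a d}"
proof -
  have "ed \<inter> {d, a d} = {}" if ed: "ed \<in> A - {{d, a d}}" for ed
  proof -
    obtain y where y: "y \<in> D" "ed = {y, a y}" using ed A by blast
    have "ed \<noteq> {d, a d}" using ed by auto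
    then show ?thesis using edge_meet[OF a y(1) d] y(2) by auto
  qed
  then show ?thesis using eA by blast
qed

section \<open>Deleting an edge not in A\<close>

lemma L1:
  assumes s: "maps s D" and a: "\<forall>x\<in>D. a x \<in> D \<and> a (a x) = x"
    and A: "A \<subseteq> {{x, a x} | x. x \<in> D}" and L: "\<forall>x\<in>D. lab (s x) = lab x"
    and d: "d \<in> D" "a d \<noteq> d" and eA: "{d, a d} \<notin> A"
    and D': "D' = new_darts D s d (a d)" and a': "a' = new_alp a s d (a d)"
    and s': "\<forall>x\<in>D'. s' x = new_perm D s d (a d) x"
  shows "half_term D s a lab w A z zs = half_term D' s' a' lab w A z zs"
proof -
  define d' where "d' = a d"
  define S where "S = \<Union>A"
  define D0 where "D0 = D - {d, d'}"
  define Mk where "Mk = markers s d d'"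
  have d'D: "d' \<in> D" using a d unfolding d'_def by auto
  have dd: "d \<in> D" "d' \<in> D" "d \<noteq> d'" using d d'D unfolding d'_def by auto
  have ad': "a d' = d" using a d unfolding d'_def by auto
  have dS: "d \<notin> S" "d' \<notin> S" using edge_not_in[OF a A d(1) eA] unfolding S_def d'_def by auto
  have SD: "S \<subseteq> D" and Sa: "\<forall>x\<in>S. a x \<in> S" using edge_set_props[OF a A] unfolding S_def by auto
  have Mk: "Mk \<subseteq> {d, d'}" unfolding Mk_def by (rule markers_sub)
  have D'eq: "D' = D0 \<union> Mk" unfolding D' new_darts_def D0_def Mk_def d'_def ..
  have a'S: "\<forall>x\<in>S. a' x = a x" using dS Mk unfolding a' new_alp_def Mk_def d'_def by auto
  have bl: "blocks D' lab = blocks D lab"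
    unfolding blocks_def D'eq D0_def Mk_def by (rule blocks_keep[OF s dd]) (use L dd in auto)
  have Rs: "Rs lab a' S = Rs lab a S" by (rule Rs_cong) (use a'S in auto)
  have cps: "comps D' a' lab A = comps D a lab A"
    unfolding comps_cc bl using Rs unfolding S_def by simp
  have nul: "nullity D' a' lab A = nullity D a lab A"
    unfolding nullity_def cps bl ..
  have a'D': "\<forall>x\<in>D'. a' x \<in> D' \<and> a' (a' x) = x"
  proof
    fix x assume x: "x \<in> D'"
    show "a' x \<in> D' \<and> a' (a' x) = x"
    proof (cases "x \<in> Mk")
      case True
      then show ?thesis using x unfolding a' new_alp_def Mk_def d'_def by auto
    next
      case False
      then have x0: "x \<in> D0" using x D'eq by auto
      have xD: "x \<in> D" "x \<noteq> d" "x \<noteq> d'" using x0 unfolding D0_def by auto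
      have axx: "a (a x) = x" "a x \<in> D" using a xD by auto
      have "a x \<noteq> d"
      proof
        assume "a x = d" then have "a (a x) = d'" unfolding d'_def by simp
        then show False using axx xD by simp
      qed
      moreover have "a x \<noteq> d'"
      proof
        assume "a x = d'" then have "a (a x) = d" using ad' by simp
        then show False using axx xD by simp
      qed
      ultimately have ax: "a x \<in> D0" using axx unfolding D0_def by auto
      then have "a x \<notin> Mk" using Mk unfolding D0_def by auto
      then show ?thesis using False ax x0 a D'eq unfolding a' new_alp_def Mk_def d'_def D0_def by auto
    qed
  qed
  have A': "A \<subseteq> {{x, a' x} | x. x \<in> D'}"
  proof
    fix ed assume ed: "ed \<in> A"
    obtain y where y: "y \<in> D" "ed = {y, a y}" using ed A by blast
    have yS: "y \<in> S" using ed y unfolding S_def by auto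
    then have "y \<in> D'" using SD dS D'eq unfolding D0_def by auto
    then show "ed \<in> {{x, a' x} | x. x \<in> D'}" using y a'S yS by auto
  qed
  have L': "\<forall>x\<in>D'. lab (s' x) = lab x"
  proof
    fix x assume x: "x \<in> D'"
    show "lab (s' x) = lab x"
    proof (cases "x \<in> Mk")
      case True
      then have "x \<notin> D - {d, d'}" using Mk by auto
      then show ?thesis using s' x unfolding new_perm_def d'_def by auto
    next
      case False
      then have x0: "x \<in> D0" using x D'eq by auto
      have "s' x = skip s d d' x" using s' x x0 unfolding new_perm_def D0_def d'_def by auto
      also have "\<dots> = sub_perm s D0 x" using skip_eq_sub_perm[OF s dd] x0 unfolding D0_def by auto
      finally have "lab (s' x) = lab (sub_perm s D0 x)" by simp
      also have "\<dots> = lab (s x)" by (rule label_walk_sub[OF s _ x0]) (use L in \<open>auto simp: D0_def\<close>)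
      finally show ?thesis using L x0 unfolding D0_def by auto
    qed
  qed
  have mk_eq: "markers (s \<circ> restr_alp a S) d d' = Mk"
    unfolding Mk_def by (rule markers_cong) (use dS in \<open>auto simp: restr_alp_def\<close>)
  have rA: "restr_alp a' S = restr_alp a S" using a'S unfolding restr_alp_def by auto
  have faces: "card {Fc \<in> sub_faces D' s' a' A. \<exists>x\<in>Fc. lab x \<in> K}
       = card {Fc \<in> sub_faces D s a A. \<exists>x\<in>Fc. lab x \<in> K}" for K
  proof (rule faces_transfer[OF s a A L dd(1,2,3) _ a'D' A' L'])
    show "D' = D - {d, d'} \<union> markers (s \<circ> restr_alp a (\<Union>A)) d d'"
      using mk_eq D'eq unfolding S_def D0_def by simp
    show "\<forall>y\<in>D - {d, d'}. s' (restr_alp a' (\<Union>A) y) = sub_perm (s \<circ> restr_alp a (\<Union>A)) (D - {d, d'}) y"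
    proof
      fix y assume y: "y \<in> D - {d, d'}"
      define t where "t = restr_alp a S y"
      have t: "t \<in> D - {d, d'}" using y a ad' dS Sa unfolding t_def restr_alp_def d'_def
        by (auto split: if_splits)
      have "t \<in> D'" using t D'eq unfolding D0_def by auto
      then have "s' t = skip s d d' t" using s' t unfolding new_perm_def d'_def by auto
      also have "\<dots> = sub_perm s (D - {d, d'}) t" using skip_eq_sub_perm[OF s dd t] .
      also have "\<dots> = sub_perm (s \<circ> restr_alp a S) (D - {d, d'}) y" unfolding t_def
        by (rule sub_perm_comp[symmetric, OF s _ y]) (use a Sa dS SD in \<open>auto simp: restr_alp_def\<close>)
      finally show "s' (restr_alp a' (\<Union>A) y) = sub_perm (s \<circ> restr_alp a (\<Union>A)) (D - {d, d'}) y"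
        using rA unfolding t_def S_def by simp
    qed
    show "\<forall>m\<in>markers (s \<circ> restr_alp a (\<Union>A)) d d'. s' (restr_alp a' (\<Union>A) m) = m"
    proof
      fix m assume "m \<in> markers (s \<circ> restr_alp a (\<Union>A)) d d'"
      then have m: "m \<in> Mk" using mk_eq unfolding S_def by simp
      then have mS: "m \<notin> S" using Mk dS by auto
      have "m \<in> D'" using m D'eq by auto
      moreover have "m \<notin> D - {d, d'}" using m Mk by auto
      ultimately show "s' (restr_alp a' (\<Union>A) m) = m"
        using s' mS unfolding restr_alp_def new_perm_def S_def d'_def by auto
    qed
    show "\<forall>y\<in>{d, d'}. lab (s (restr_alp a (\<Union>A) y)) = lab y"
      using dS L dd unfolding restr_alp_def S_def by auto
  qed
  have tg: "twice_g D' s' a' lab w A K = twice_g D s a lab w A K" for K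
    unfolding twice_g_def using faces[of K] by simp
  show ?thesis unfolding half_term_def nul cps tg ..
qed



lemma merge_img_out:
  assumes "b2 \<notin> K" shows "(\<lambda>b. if b = b2 then b1 else b) ` K = K"
  using assms by (auto simp: image_iff)

lemma merge_img_in:
  assumes "b1 \<in> K" "b2 \<in> K" shows "(\<lambda>b. if b = b2 then b1 else b) ` K = K - {b2} \<union> {b1}"
  using assms by (auto simp: image_iff split: if_splits)

lemma merge_sum:
  fixes w :: "'b \<Rightarrow> nat"
  assumes fin: "finite K" and ne: "b1 \<noteq> b2" and in1: "b1 \<in> K" and in2: "b2 \<in> K"
  shows "(\<Sum>b\<in>K - {b2}. (w(b1 := w b1 + w b2)) b) = (\<Sum>b\<in>K. w b)"
proof -
  have "(\<Sum>b\<in>K - {b2}. (w(b1 := w b1 + w b2)) b) = (w(b1 := w b1 + w b2)) b1 + (\<Sum>b\<in>K - {b2} - {b1}. (w(b1 := w b1 + w b2)) b)"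
    using fin in1 ne by (subst sum.remove[of _ b1]) auto
  also have "(\<Sum>b\<in>K - {b2} - {b1}. (w(b1 := w b1 + w b2)) b) = (\<Sum>b\<in>K - {b2} - {b1}. w b)"
    by (rule sum.cong) auto
  finally have "(\<Sum>b\<in>K - {b2}. (w(b1 := w b1 + w b2)) b) = w b1 + w b2 + (\<Sum>b\<in>K - {b2} - {b1}. w b)" by simp
  moreover have "(\<Sum>b\<in>K. w b) = w b2 + (\<Sum>b\<in>K - {b2}. w b)" using fin in2 by (rule sum.remove)
  moreover have "(\<Sum>b\<in>K - {b2}. w b) = w b1 + (\<Sum>b\<in>K - {b2} - {b1}. w b)" using fin in1 ne by (subst sum.remove[of _ b1]) auto
  ultimately show ?thesis by simp
qed

lemma upd_sum:
  fixes w :: "'b \<Rightarrow> nat"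
  assumes fin: "finite K"
  shows "(\<Sum>b\<in>K. (w(b1 := w b1 + 1)) b) = (\<Sum>b\<in>K. w b) + (if b1 \<in> K then 1 else 0)"
proof (cases "b1 \<in> K")
  case True
  have "(\<Sum>b\<in>K. (w(b1 := w b1 + 1)) b) = (w(b1 := w b1 + 1)) b1 + (\<Sum>b\<in>K - {b1}. (w(b1 := w b1 + 1)) b)"
    using fin True by (rule sum.remove)
  also have "(\<Sum>b\<in>K - {b1}. (w(b1 := w b1 + 1)) b) = (\<Sum>b\<in>K - {b1}. w b)" by (rule sum.cong) auto
  finally show ?thesis using True sum.remove[OF fin True, of w] by simp
next
  case False
  then have "(\<Sum>b\<in>K. (w(b1 := w b1 + 1)) b) = (\<Sum>b\<in>K. w b)" by (intro sum.cong) auto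
  then show ?thesis using False by simp
qed

lemma upd_sum_out:
  fixes w :: "'b \<Rightarrow> nat"
  assumes "b1 \<notin> K"
  shows "(\<Sum>b\<in>K. (w(b1 := v)) b) = (\<Sum>b\<in>K. w b)"
  using assms by (intro sum.cong) auto



lemma L2:
  fixes w :: "'b \<Rightarrow> nat" and z :: "'a::comm_ring_1"
  assumes s: "maps s D" and a: "\<forall>x\<in>D. a x \<in> D \<and> a (a x) = x" and aout: "\<forall>x. x \<notin> D \<longrightarrow> a x = x"
    and A: "A \<subseteq> {{x, a x} | x. x \<in> D}" and L: "\<forall>x\<in>D. lab (s x) = lab x"
    and d: "d \<in> D" "a d \<noteq> d" and eA: "{d, a d} \<in> A"
    and f: "\<forall>x. f x = s (a x)"
    and D': "D' = new_darts D f d (a d)" and a': "a' = new_alp a f d (a d)"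
    and s': "\<forall>x\<in>D'. s' x = new_perm D f d (a d) (a' x)"
    and lab': "lab' = (if lab d = lab (a d) then lab else (\<lambda>x. if lab x = lab (a d) then lab d else lab x))"
    and w': "w' = (if lab d = lab (a d) then w(lab d := w (lab d) + 1) else w(lab d := w (lab d) + w (lab (a d))))"
  shows "half_term D s a lab w A z zs = z ^ (2 - card {lab d, lab (a d)}) * half_term D' s' a' lab' w' (A - {{d, a d}}) z zs"
proof -
  define d' where "d' = a d"
  define b1 where "b1 = lab d"
  define b2 where "b2 = lab d'"
  define m where "m = (\<lambda>b. if b = b2 then b1 else b)"
  define L where "L = m \<circ> lab"
  define e where "e = {d, d'}"
  define S where "S = \<Union>A"
  define A' where "A' = A - {e}"
  define S' where "S' = \<Union>A'"
  define D0 where "D0 = D - {d, d'}"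
  define Mk where "Mk = markers f d d'"
  define B where "B = blocks D lab"
  have fin: "finite D" using s maps_def by blast
  have d'D: "d' \<in> D" using a d unfolding d'_def by auto
  have dd: "d \<in> D" "d' \<in> D" "d \<noteq> d'" using d d'D unfolding d'_def by auto
  have ad': "a d' = d" using a d unfolding d'_def by auto
  have aa: "\<And>y. a (a y) = y" using a aout by (metis)
  have SD: "S \<subseteq> D" and Sa: "\<forall>x\<in>S. a x \<in> S" and finA: "finite A"
    using edge_set_props[OF a A] fin unfolding S_def by auto
  have eA': "e \<in> A" using eA unfolding e_def d'_def .
  have dS: "d \<in> S" "d' \<in> S" using eA' unfolding S_def e_def by auto
  have S'eq: "S' = S - {d, d'}" using edge_in_disj[OF a A d(1) eA] unfolding S'_def A'_def S_def e_def d'_def .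
  have Mk: "Mk \<subseteq> {d, d'}" unfolding Mk_def by (rule markers_sub)
  have D'eq: "D' = D0 \<union> Mk" unfolding D' new_darts_def D0_def Mk_def d'_def ..
  have a'S: "\<forall>x\<in>S'. a' x = a x" using S'eq Mk unfolding a' new_alp_def Mk_def d'_def by auto
  have lab'eq: "lab' = L"
    unfolding lab' L_def m_def b1_def b2_def d'_def by (rule ext) auto
  have Ldd: "L d' = L d" unfolding L_def m_def b1_def b2_def by simp
  have fs: "f = s \<circ> a" using f by (intro ext) simp
  have "inj_on a D" by (rule inj_onI) (metis aa)
  then have ma: "maps a D" using fin a unfolding maps_def by auto
  have mf: "maps f D" unfolding fs by (rule maps_comp[OF s ma])
  have a0: "a x \<in> D0" if x0: "x \<in> D0" for x
  proof -
    have xD: "x \<in> D" "x \<noteq> d" "x \<noteq> d'" using x0 unfolding D0_def by auto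
    have "a x \<noteq> d" using aa[of x] xD unfolding d'_def by metis
    moreover have "a x \<noteq> d'" using aa[of x] xD ad' by metis
    ultimately show ?thesis using a xD unfolding D0_def by auto
  qed
  have a'0: "a' x = a x" if "x \<in> D0" for x
    using that Mk unfolding a' new_alp_def Mk_def D0_def d'_def by auto
  have a'M: "a' x = x" if "x \<in> Mk" for x
    using that unfolding a' new_alp_def Mk_def d'_def by auto
  have a'D': "\<forall>x\<in>D'. a' x \<in> D' \<and> a' (a' x) = x"
  proof
    fix x assume x: "x \<in> D'"
    show "a' x \<in> D' \<and> a' (a' x) = x"
    proof (cases "x \<in> Mk")
      case True then show ?thesis using x a'M by auto
    next
      case False
      then have x0: "x \<in> D0" using x D'eq by auto
      then show ?thesis using a0 a'0 aa D'eq by auto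
    qed
  qed
  have S'D0: "S' \<subseteq> D0" using S'eq SD unfolding D0_def by auto
  have A': "A' \<subseteq> {{x, a' x} | x. x \<in> D'}"
  proof
    fix ed assume ed: "ed \<in> A'"
    obtain y where y: "y \<in> D" "ed = {y, a y}" using ed A unfolding A'_def by blast
    have yS: "y \<in> S'" using ed y unfolding S'_def by auto
    then have "y \<in> D'" using S'D0 D'eq by auto
    then show "ed \<in> {{x, a' x} | x. x \<in> D'}" using y a'S yS by auto
  qed
  have finD': "finite D'" using fin Mk dd D'eq unfolding D0_def by (auto intro: finite_subset)
  have Lf: "\<forall>y\<in>{d, d'}. L (f y) = L y"
    using f L dd ad' Ldd unfolding L_def d'_def by auto
  have bl': "blocks D' lab' = m ` B"
  proof -
    have "blocks D' lab' = L ` (D - {d, d'} \<union> markers f d d')"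
      unfolding blocks_def lab'eq D'eq D0_def Mk_def ..
    also have "\<dots> = L ` D" by (rule blocks_keep[OF mf dd Lf])
    finally show ?thesis unfolding B_def blocks_def L_def by (simp add: image_comp)
  qed
  have b1B: "b1 \<in> B" and b2B: "b2 \<in> B" unfolding B_def blocks_def b1_def b2_def using dd by auto
  define E where "E = Rs lab a S"
  define E' where "E' = Rs (m \<circ> lab) a (S - {d, a d})"
  have sE: "sym E" unfolding E_def by (rule sym_Rs)
  have Rs': "Rs lab' a' S' = E'"
    unfolding E'_def lab'eq L_def S'eq d'_def[symmetric]
    by (rule Rs_cong) (use a'S S'eq Sa in auto)
  have dE: "(lab d, lab (a d)) \<in> E" using dS unfolding E_def Rs_def by auto
  have dSa: "d \<in> S" using dS by simp
  have ccm: "cc (m ` B) E' (m b) = m ` cc B E b" if "b \<in> B" for b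
    by (rule merge_cc[OF E_def E'_def _ dSa]) (use that aa in \<open>auto simp: m_def b1_def b2_def d'_def\<close>)
  have cps: "comps D a lab A = cc B E ` B" unfolding comps_cc B_def E_def S_def ..
  have cps': "comps D' a' lab' A' = (\<lambda>K. m ` K) ` comps D a lab A"
  proof -
    have "comps D' a' lab' A' = cc (m ` B) E' ` (m ` B)" unfolding comps_cc bl' S'_def[symmetric] Rs' ..
    also have "\<dots> = (\<lambda>b. cc (m ` B) E' (m b)) ` B" by (simp add: image_comp)
    also have "\<dots> = (\<lambda>b. m ` cc B E b) ` B" by (rule image_cong) (auto simp: ccm)
    also have "\<dots> = (\<lambda>K. m ` K) ` comps D a lab A" unfolding cps by (simp add: image_comp)
    finally show ?thesis .
  qed
  have mkey: "(u, v) \<in> E\<^sup>*" if "m u = m v" for u v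
    by (rule merge_key[of lab d a E m, OF dE _ sE that]) (unfold m_def b1_def b2_def d'_def, rule refl)
  have Kcc: "K = cc B E r" if K: "K \<in> comps D a lab A" and r: "r \<in> K" for K r
    using cc_rep[OF sE _ r] K unfolding cps by simp
  have Kmem: "m v \<in> m ` K \<longleftrightarrow> v \<in> K" if K: "K \<in> comps D a lab A" and v: "v \<in> B" for K v
  proof
    assume "m v \<in> m ` K"
    then obtain k where k: "k \<in> K" "m v = m k" by auto
    have "(k, v) \<in> E\<^sup>*" using mkey k(2) by simp
    then show "v \<in> K" using Kcc[OF K k(1)] v unfolding cc_def by auto
  qed auto
  have KB: "K \<subseteq> B" if "K \<in> comps D a lab A" for K using that unfolding cps cc_def by auto
  have b12: "b1 \<in> K \<longleftrightarrow> b2 \<in> K" if K: "K \<in> comps D a lab A" for K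
  proof -
    have "m b1 = m b2" unfolding m_def by simp
    then show ?thesis using Kmem[OF K b1B] Kmem[OF K b2B] by simp
  qed
  have injm: "inj_on (\<lambda>K. m ` K) (comps D a lab A)"
  proof (rule inj_onI)
    fix K1 K2 assume K1: "K1 \<in> comps D a lab A" and K2: "K2 \<in> comps D a lab A" and eq: "m ` K1 = m ` K2"
    obtain b where b: "b \<in> B" "K1 = cc B E b" using K1 unfolding cps by auto
    have "K1 \<noteq> {}" using cc_self[OF b(1), of E] b(2) by auto
    then obtain r where r: "r \<in> K1" by auto
    then have "m r \<in> m ` K2" using eq by auto
    then have "r \<in> K2" using Kmem[OF K2] KB[OF K1] r by auto
    then show "K1 = K2" using Kcc[OF K1 r] Kcc[OF K2] by simp
  qed
  have ccard: "card (comps D' a' lab' A') = card (comps D a lab A)"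
    unfolding cps' using card_image[OF injm] .
  have cardA': "card A' = card A - 1" unfolding A'_def using finA eA' by simp
  have Age: "card A \<ge> 1" using finA eA' by (metis One_nat_def Suc_leI card_gt_0_iff empty_iff)
  have finB: "finite B" unfolding B_def blocks_def using fin by simp
  have cardB': "card (blocks D' lab') = (if b1 = b2 then card B else card B - 1)"
  proof (cases "b1 = b2")
    case True
    then have "m = (\<lambda>b. b)" unfolding m_def by auto
    then have "m ` B = B" by simp
    then show ?thesis using True bl' by simp
  next
    case False
    have "m ` B = B - {b2} \<union> {b1}" unfolding m_def by (rule merge_img_in[OF b1B b2B])
    also have "\<dots> = B - {b2}" using b1B False by auto
    finally show ?thesis using False bl' finB b2B by simp
  qed
  have rank': "card (blocks D' lab') \<le> card A' + card (comps D' a' lab' A')"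
    by (rule comps_rank[OF finD' a'D' A'])
  have nul: "z ^ nullity D a lab A = z ^ (2 - card {lab d, lab (a d)}) * z ^ nullity D' a' lab' A'"
  proof (cases "b1 = b2")
    case True
    then have c1: "card {lab d, lab (a d)} = 1" unfolding b1_def b2_def d'_def by simp
    have "nullity D a lab A = nullity D' a' lab' A' + 1"
      using rank' cardA' cardB' ccard Age True unfolding nullity_def B_def by simp
    then show ?thesis using c1 by (simp add: mult.commute)
  next
    case False
    then have c2: "card {lab d, lab (a d)} = 2" unfolding b1_def b2_def d'_def by simp
    have "card B \<ge> 1" using b1B finB by (metis One_nat_def Suc_leI card_gt_0_iff empty_iff)
    then have "nullity D a lab A = nullity D' a' lab' A'"
      using cardA' cardB' ccard Age False unfolding nullity_def B_def by simp
    then show ?thesis using c2 by simp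
  qed
  have LL: "\<forall>x\<in>D. L (s x) = L x" using L unfolding L_def by auto
  have D0D: "D0 \<subseteq> D" unfolding D0_def by auto
  have mk_eq: "markers (s \<circ> restr_alp a S) d d' = Mk"
    unfolding Mk_def by (rule markers_cong) (use dS f ad' in \<open>auto simp: restr_alp_def d'_def\<close>)
  have L': "\<forall>x\<in>D'. L (s' x) = L x"
  proof
    fix x assume x: "x \<in> D'"
    show "L (s' x) = L x"
    proof (cases "x \<in> Mk")
      case True
      then have "x \<notin> D - {d, d'}" using Mk by auto
      then show ?thesis using s' x a'M[OF True] unfolding new_perm_def d'_def by auto
    next
      case False
      then have x0: "x \<in> D0" using x D'eq by auto
      have ax0: "a x \<in> D0" by (rule a0[OF x0])
      have "s' x = skip f d d' (a x)" using s' x a'0[OF x0] ax0 unfolding new_perm_def D0_def d'_def by auto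
      also have "\<dots> = sub_perm f D0 (a x)" using skip_eq_sub_perm[OF mf dd] ax0 unfolding D0_def by auto
      finally have "L (s' x) = L (sub_perm f D0 (a x))" by simp
      also have "\<dots> = L (f (a x))"
        by (rule label_walk_sub[OF mf D0D ax0]) (use Lf in \<open>auto simp: D0_def\<close>)
      also have "\<dots> = L (s x)" using f aa by simp
      finally show ?thesis using LL x0 D0D by auto
    qed
  qed
  have S'S: "\<forall>y\<in>D0. (y \<in> S') = (y \<in> S)" using S'eq unfolding D0_def by auto
  have faces0: "card {Fc \<in> sub_faces D' s' a' A'. \<exists>x\<in>Fc. L x \<in> KK}
       = card {Fc \<in> sub_faces D s a A. \<exists>x\<in>Fc. L x \<in> KK}" for KK
  proof (rule faces_transfer[OF s a A LL dd(1,2,3) _ a'D' A' L'])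
    show "D' = D - {d, d'} \<union> markers (s \<circ> restr_alp a (\<Union>A)) d d'"
      using mk_eq D'eq unfolding S_def D0_def by simp
    show "\<forall>y\<in>D - {d, d'}. s' (restr_alp a' (\<Union>A') y) = sub_perm (s \<circ> restr_alp a (\<Union>A)) (D - {d, d'}) y"
    proof
      fix y assume y: "y \<in> D - {d, d'}"
      then have y0: "y \<in> D0" unfolding D0_def .
      define t where "t = restr_alp a S y"
      have teq: "restr_alp a' S' y = t"
        using S'S y0 a'S unfolding t_def restr_alp_def by auto
      have t0: "t \<in> D0" using a0[OF y0] y0 unfolding t_def restr_alp_def by auto
      have at0: "a t \<in> D0" by (rule a0[OF t0])
      have "t \<in> D'" using t0 D'eq by auto
      then have "s' t = new_perm D f d d' (a t)" using s' a'0[OF t0] unfolding d'_def by auto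
      also have "\<dots> = skip f d d' (a t)" using at0 unfolding new_perm_def D0_def by auto
      also have "\<dots> = sub_perm f D0 (a t)" using skip_eq_sub_perm[OF mf dd] at0 unfolding D0_def by auto
      also have "\<dots> = sub_perm (f \<circ> (a \<circ> restr_alp a S)) D0 y"
      proof -
        have "sub_perm (f \<circ> (a \<circ> restr_alp a S)) D0 y = sub_perm f D0 ((a \<circ> restr_alp a S) y)"
        proof (rule sub_perm_comp[OF mf D0D y0])
          show "\<forall>y. y \<notin> D0 \<longrightarrow> (a \<circ> restr_alp a S) y = y"
            using aa aout dS SD unfolding restr_alp_def D0_def by auto
          show "\<forall>y\<in>D0. (a \<circ> restr_alp a S) y \<in> D0"
            using aa a0 unfolding restr_alp_def by auto
        qed
        then show ?thesis unfolding t_def by simp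
      qed
      also have "f \<circ> (a \<circ> restr_alp a S) = s \<circ> restr_alp a S" using f aa by (intro ext) simp
      finally show "s' (restr_alp a' (\<Union>A') y) = sub_perm (s \<circ> restr_alp a (\<Union>A)) (D - {d, d'}) y"
        unfolding S'_def[symmetric] S_def[symmetric] D0_def[symmetric] teq .
    qed
    show "\<forall>mm\<in>markers (s \<circ> restr_alp a (\<Union>A)) d d'. s' (restr_alp a' (\<Union>A') mm) = mm"
    proof
      fix mm assume "mm \<in> markers (s \<circ> restr_alp a (\<Union>A)) d d'"
      then have mm: "mm \<in> Mk" using mk_eq unfolding S_def by simp
      then have mS: "mm \<notin> S'" using Mk S'D0 unfolding D0_def by auto
      have "mm \<in> D'" using mm D'eq by auto
      moreover have "mm \<notin> D - {d, d'}" using mm Mk by auto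
      ultimately show "s' (restr_alp a' (\<Union>A') mm) = mm"
        using s' mS a'M[OF mm] unfolding restr_alp_def new_perm_def S'_def d'_def by auto
    qed
    show "\<forall>y\<in>{d, d'}. L (s (restr_alp a (\<Union>A) y)) = L y"
      using dS LL a dd ad' Ldd unfolding restr_alp_def S_def d'_def by auto
  qed
  have tg: "twice_g D' s' a' lab' w' A' (m ` K) = twice_g D s a lab w A K" if K: "K \<in> comps D a lab A" for K
  proof -
    have KB': "K \<subseteq> B" by (rule KB[OF K])
    have finK: "finite K" using finB KB' finite_subset by blast
    define EK where "EK = {ed \<in> A. \<exists>x\<in>ed. lab x \<in> K}"
    have labB: "lab x \<in> B" if "x \<in> D" for x using that unfolding B_def blocks_def by auto
    have edges': "{ed \<in> A'. \<exists>x\<in>ed. lab' x \<in> m ` K} = EK - {e}"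
    proof -
      have "(\<exists>x\<in>ed. lab' x \<in> m ` K) = (\<exists>x\<in>ed. lab x \<in> K)" if ed: "ed \<in> A" for ed
      proof -
        have "ed \<subseteq> D" using ed SD unfolding S_def by auto
        then show ?thesis using Kmem[OF K] labB unfolding lab'eq L_def by auto
      qed
      then show ?thesis unfolding EK_def A'_def by auto
    qed
    have eEK: "e \<in> EK \<longleftrightarrow> b1 \<in> K"
      using eA' b12[OF K] unfolding EK_def e_def b1_def b2_def by auto
    have finEK: "finite EK" using finA unfolding EK_def by simp
    have cE: "int (card {ed \<in> A'. \<exists>x\<in>ed. lab' x \<in> m ` K}) = int (card EK) - (if b1 \<in> K then 1 else 0)"
    proof (cases "e \<in> EK")
      case True
      then have "card EK > 0" using finEK card_gt_0_iff by blast
      then show ?thesis unfolding edges' using True eEK finEK by (simp add: card_Diff_singleton of_nat_diff)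
    next
      case False
      then show ?thesis unfolding edges' using eEK by simp
    qed
    have mid: "b1 = b2 \<Longrightarrow> m ` K = K" unfolding m_def by auto
    have cK: "int (card (m ` K)) = int (card K) - (if b1 \<noteq> b2 \<and> b1 \<in> K then 1 else 0)"
    proof (cases "b1 \<in> K")
      case True
      then have b2K: "b2 \<in> K" using b12[OF K] by simp
      show ?thesis
      proof (cases "b1 = b2")
        case True then show ?thesis using mid by simp
      next
        case False
        have "m ` K = K - {b2} \<union> {b1}" unfolding m_def by (rule merge_img_in[OF \<open>b1 \<in> K\<close> b2K])
        also have "\<dots> = K - {b2}" using \<open>b1 \<in> K\<close> False by auto
        finally have "m ` K = K - {b2}" .
        moreover have "card K > 0" using finK b2K card_gt_0_iff by blast
        ultimately show ?thesis using False True b2K finK by (simp add: of_nat_diff)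
      qed
    next
      case False
      then have "b2 \<notin> K" using b12[OF K] by simp
      then have "m ` K = K" unfolding m_def by (rule merge_img_out)
      then show ?thesis using False by simp
    qed
    have sW: "int (\<Sum>b\<in>m ` K. w' b) = int (\<Sum>b\<in>K. w b) + (if b1 = b2 \<and> b1 \<in> K then 1 else 0)"
    proof (cases "b1 = b2")
      case True
      then have "w' = w(b1 := w b1 + 1)" unfolding w' b1_def b2_def d'_def by simp
      then show ?thesis using mid[OF True] upd_sum[OF finK, of w b1] True by simp
    next
      case False
      then have w'eq: "w' = w(b1 := w b1 + w b2)" unfolding w' b1_def b2_def d'_def by simp
      show ?thesis
      proof (cases "b1 \<in> K")
        case True
        then have b2K: "b2 \<in> K" using b12[OF K] by simp
        have "m ` K = K - {b2} \<union> {b1}" unfolding m_def by (rule merge_img_in[OF True b2K])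
        also have "\<dots> = K - {b2}" using True False by auto
        finally show ?thesis using merge_sum[OF finK False True b2K, of w] w'eq False by simp
      next
        case nK: False
        then have "b2 \<notin> K" using b12[OF K] by simp
        then have "m ` K = K" unfolding m_def by (rule merge_img_out)
        then show ?thesis using upd_sum_out[OF nK, of w] w'eq False nK by simp
      qed
    qed
    have fF1: "{Fc \<in> sub_faces D s a A. \<exists>x\<in>Fc. lab x \<in> K} = {Fc \<in> sub_faces D s a A. \<exists>x\<in>Fc. L x \<in> m ` K}"
    proof -
      have "(\<exists>x\<in>Fc. lab x \<in> K) = (\<exists>x\<in>Fc. L x \<in> m ` K)" if Fc: "Fc \<in> sub_faces D s a A" for Fc
      proof -
        have "Fc \<subseteq> D" by (rule sub_faces_subset[OF s _ _ Fc]) (use SD Sa in \<open>auto simp: S_def\<close>)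
        then show ?thesis using Kmem[OF K] labB unfolding L_def by auto
      qed
      then show ?thesis by blast
    qed
    have faces: "card {Fc \<in> sub_faces D' s' a' A'. \<exists>x\<in>Fc. lab' x \<in> m ` K}
        = card {Fc \<in> sub_faces D s a A. \<exists>x\<in>Fc. lab x \<in> K}"
      unfolding fF1 lab'eq by (rule faces0)
    show ?thesis unfolding twice_g_def faces using cE cK sW unfolding EK_def by simp
  qed
  have "half_term D' s' a' lab' w' A' z zs = z ^ nullity D' a' lab' A' * (\<Prod>K\<in>comps D a lab A. zs (twice_g D s a lab w A K))"
  proof -
    have "(\<Prod>K'\<in>comps D' a' lab' A'. zs (twice_g D' s' a' lab' w' A' K'))
        = (\<Prod>K\<in>comps D a lab A. zs (twice_g D' s' a' lab' w' A' (m ` K)))"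
      unfolding cps' using prod.reindex[OF injm, of "\<lambda>K'. zs (twice_g D' s' a' lab' w' A' K')"]
      by (simp add: comp_def)
    also have "\<dots> = (\<Prod>K\<in>comps D a lab A. zs (twice_g D s a lab w A K))"
      by (rule prod.cong) (auto simp: tg)
    finally show ?thesis unfolding half_term_def by simp
  qed
  then show ?thesis unfolding half_term_def nul A'_def e_def d'_def by (simp add: mult.assoc)
qed



lemma sum_Pow_split:
  assumes fin: "finite B" and e: "e \<notin> B"
  shows "(\<Sum>X\<in>Pow (insert e B). g X) = (\<Sum>X\<in>Pow B. g X) + (\<Sum>X\<in>Pow B. g (insert e X))"
proof -
  have inj: "inj_on (insert e) (Pow B)"
  proof (rule inj_onI)
    fix X Y assume X: "X \<in> Pow B" and Y: "Y \<in> Pow B" and eq: "insert e X = insert e Y"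
    have "e \<notin> X" "e \<notin> Y" using X Y e by auto
    then have "X = insert e X - {e}" "Y = insert e Y - {e}" by auto
    then show "X = Y" using eq by simp
  qed
  have "(\<Sum>X\<in>Pow (insert e B). g X) = (\<Sum>X\<in>Pow B. g X) + (\<Sum>X\<in>insert e ` Pow B. g X)"
    unfolding Pow_insert by (rule sum.union_disjoint) (use fin e in auto)
  also have "(\<Sum>X\<in>insert e ` Pow B. g X) = (\<Sum>X\<in>Pow B. g (insert e X))"
    using sum.reindex[OF inj, of g] by (simp add: comp_def)
  finally show ?thesis .
qed

lemma permutes_maps:
  assumes "finite D" "s permutes D" shows "maps s D"
proof -
  have "inj_on s D" using permutes_inj_on[OF assms(2)] .
  moreover have "\<forall>x\<in>D. s x \<in> D" using permutes_in_image[OF assms(2)] by simp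
  ultimately show ?thesis unfolding maps_def using assms(1) by simp
qed

lemma pdelete_simps:
  "darts (pdelete P d) = new_darts (darts P) (sig P) d (alp P d)"
  "sig (pdelete P d) = new_perm (darts P) (sig P) d (alp P d)"
  "alp (pdelete P d) = new_alp (alp P) (sig P) d (alp P d)"
  "vlab (pdelete P d) = vlab P"
  "wV (pdelete P d) = wV P"
  "flab (pdelete P d) = (if flab P d = flab P (alp P d) then flab P
                 else (\<lambda>x. if flab P x = flab P (alp P d) then flab P d else flab P x))"
  "wF (pdelete P d) = (if flab P d = flab P (alp P d) then (wF P)(flab P d := wF P (flab P d) + 1)
               else (wF P)(flab P d := wF P (flab P d) + wF P (flab P (alp P d))))"
  by (simp_all add: pdelete_def Let_def)

lemma pcontract_simps:
  "darts (pcontract P d) = new_darts (darts P) (phi P) d (alp P d)"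
  "sig (pcontract P d) = new_perm (darts P) (phi P) d (alp P d) \<circ> new_alp (alp P) (phi P) d (alp P d)"
  "alp (pcontract P d) = new_alp (alp P) (phi P) d (alp P d)"
  "flab (pcontract P d) = flab P"
  "wF (pcontract P d) = wF P"
  "vlab (pcontract P d) = (if vlab P d = vlab P (alp P d) then vlab P
                 else (\<lambda>x. if vlab P x = vlab P (alp P d) then vlab P d else vlab P x))"
  "wV (pcontract P d) = (if vlab P d = vlab P (alp P d) then (wV P)(vlab P d := wV P (vlab P d) + 1)
               else (wV P)(vlab P d := wV P (vlab P d) + wV P (vlab P (alp P d))))"
  by (simp_all add: pcontract_def Let_def)

lemma new_alp_inv:
  assumes a: "\<forall>x\<in>D. a x \<in> D \<and> a (a x) = x" and d: "d \<in> D"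
  shows "\<forall>x\<in>new_darts D p d (a d). new_alp a p d (a d) (new_alp a p d (a d) x) = x"
proof
  fix x assume x: "x \<in> new_darts D p d (a d)"
  have ad: "a (a d) = d" using a d by auto
  show "new_alp a p d (a d) (new_alp a p d (a d) x) = x"
  proof (cases "x \<in> markers p d (a d)")
    case True then show ?thesis unfolding new_alp_def by simp
  next
    case False
    then have x0: "x \<in> D" "x \<noteq> d" "x \<noteq> a d" using x unfolding new_darts_def by auto
    have "a x \<noteq> d" using x0 a by metis
    moreover have "a x \<noteq> a d" using x0 a d by metis
    ultimately have "a x \<notin> markers p d (a d)" using markers_sub[of p d "a d"] by auto
    then show ?thesis using False x0 a unfolding new_alp_def by auto
  qed
qed

lemma edges_new:
  assumes a: "\<forall>x\<in>D. a x \<in> D \<and> a (a x) = x" and d: "d \<in> D"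
  shows "{{x, new_alp a p d (a d) x} | x. x \<in> new_darts D p d (a d) \<and> new_alp a p d (a d) x \<noteq> x}
       = {{x, a x} | x. x \<in> D \<and> a x \<noteq> x} - {{d, a d}}"
proof -
  have ad: "a (a d) = d" using a d by auto
  have Mk: "markers p d (a d) \<subseteq> {d, a d}" by (rule markers_sub)
  show ?thesis
  proof
    show "{{x, new_alp a p d (a d) x} | x. x \<in> new_darts D p d (a d) \<and> new_alp a p d (a d) x \<noteq> x}
       \<subseteq> {{x, a x} | x. x \<in> D \<and> a x \<noteq> x} - {{d, a d}}"
    proof
      fix ed assume "ed \<in> {{x, new_alp a p d (a d) x} | x. x \<in> new_darts D p d (a d) \<and> new_alp a p d (a d) x \<noteq> x}"
      then obtain x where x: "x \<in> new_darts D p d (a d)" "new_alp a p d (a d) x \<noteq> x" "ed = {x, new_alp a p d (a d) x}"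
        by blast
      then have xM: "x \<notin> markers p d (a d)" unfolding new_alp_def by auto
      then have x0: "x \<in> D" "x \<noteq> d" "x \<noteq> a d" using x(1) unfolding new_darts_def by auto
      have ex: "ed = {x, a x}" "a x \<noteq> x" using x xM unfolding new_alp_def by auto
      have "ed \<noteq> {d, a d}" using ex(1) x0 by auto
      then show "ed \<in> {{x, a x} | x. x \<in> D \<and> a x \<noteq> x} - {{d, a d}}" using ex x0 by auto
    qed
  next
    show "{{x, a x} | x. x \<in> D \<and> a x \<noteq> x} - {{d, a d}}
       \<subseteq> {{x, new_alp a p d (a d) x} | x. x \<in> new_darts D p d (a d) \<and> new_alp a p d (a d) x \<noteq> x}"
    proof
      fix ed assume "ed \<in> {{x, a x} | x. x \<in> D \<and> a x \<noteq> x} - {{d, a d}}"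
      then obtain x where x: "x \<in> D" "a x \<noteq> x" "ed = {x, a x}" "ed \<noteq> {d, a d}" by blast
      have "x \<noteq> d" using x by auto
      moreover have "x \<noteq> a d" using x ad by auto
      ultimately have "x \<in> new_darts D p d (a d)" "x \<notin> markers p d (a d)"
        using x(1) Mk unfolding new_darts_def by auto
      then show "ed \<in> {{x, new_alp a p d (a d) x} | x. x \<in> new_darts D p d (a d) \<and> new_alp a p d (a d) x \<noteq> x}"
        using x unfolding new_alp_def by auto
    qed
  qed
qed

lemma ht_empty:
  assumes s: "maps s D"
  shows "half_term D s a lab w {} z zs
     = (\<Prod>b\<in>lab ` D. zs (1 - int (card {v \<in> orbits s D. \<exists>x\<in>v. lab x = b}) + int (w b)))"
proof -
  have fin: "finite D" using s maps_def by blast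
  have Rs0: "Rs lab a (\<Union>{}) = {}" unfolding Rs_def by simp
  have cps: "comps D a lab {} = (\<lambda>b. {b}) ` blocks D lab"
    unfolding comps_cc Rs0 by (rule image_cong) (auto simp: cc_empty)
  have inj: "inj_on (\<lambda>b. {b}) (blocks D lab)" by (auto simp: inj_on_def)
  have finB: "finite (blocks D lab)" unfolding blocks_def using fin by simp
  have nul: "nullity D a lab {} = 0" unfolding nullity_def cps using card_image[OF inj] by simp
  have sf: "sub_faces D s a {} = orbits s D" unfolding sub_faces_def orbits_def Let_def by auto
  have tg: "twice_g D s a lab w {} {b} = 1 - int (card {v \<in> orbits s D. \<exists>x\<in>v. lab x = b}) + int (w b)" for b
    unfolding twice_g_def sf by simp
  have "(\<Prod>K\<in>comps D a lab {}. zs (twice_g D s a lab w {} K)) = (\<Prod>b\<in>blocks D lab. zs (twice_g D s a lab w {} {b}))"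
    unfolding cps using prod.reindex[OF inj, of "\<lambda>K. zs (twice_g D s a lab w {} K)"] by (simp add: comp_def)
  then show ?thesis unfolding half_term_def nul tg blocks_def by simp
qed



theorem theorem3p3:
  fixes P :: "('d, 'b, 'c) pmap" and d :: 'd
    and x y :: "'a::comm_ring_1" and xs ys :: "int \<Rightarrow> 'a"
  assumes "packaged_ribbon_graph P"
  shows "(d \<in> darts P \<and> alp P d \<noteq> d \<longrightarrow>
            pTutte P x xs y ys =
              x ^ (2 - eta P d) * pTutte (pdelete P d) x xs y ys
            + y ^ (2 - mu P d) * pTutte (pcontract P d) x xs y ys)
       \<and> (edges P = {} \<longrightarrow>
            pTutte P x xs y ys =
              (\<Prod>c\<in>flab P ` darts P. xs (1 - int (fblock_size P c) + int (wF P c))) *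
              (\<Prod>b\<in>vlab P ` darts P. ys (1 - int (vblock_size P b) + int (wV P b))))"
proof -
  define D where "D = darts P"
  define sg where "sg = sig P"
  define al where "al = alp P"
  define ph where "ph = phi P"
  have finD: "finite D" and sgp: "sg permutes D" and alp: "al permutes D"
    and alal: "\<forall>x\<in>D. al (al x) = x"
    and vl: "\<forall>x\<in>D. vlab P (sg x) = vlab P x" and fl: "\<forall>x\<in>D. flab P (ph x) = flab P x"
    using assms unfolding packaged_ribbon_graph_def D_def sg_def al_def ph_def by auto
  have ms: "maps sg D" by (rule permutes_maps[OF finD sgp])
  have mal: "maps al D" by (rule permutes_maps[OF finD alp])
  have ma: "\<forall>x\<in>D. al x \<in> D \<and> al (al x) = x" using alal permutes_in_image[OF alp] by auto
  have aout: "\<forall>x. x \<notin> D \<longrightarrow> al x = x" using permutes_not_in[OF alp] by auto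
  have aa: "\<And>z. al (al z) = z" using ma aout by metis
  have ph_eq: "ph = sg \<circ> al" unfolding ph_def sg_def al_def phi_def ..
  have mph: "maps ph D" unfolding ph_eq by (rule maps_comp[OF ms mal])
  have sg_ph: "\<forall>z. sg z = ph (al z)" using aa unfolding ph_eq by simp
  have ph_sg: "\<forall>z. ph z = sg (al z)" unfolding ph_eq by simp
  have edgesE: "edges P \<subseteq> {{z, al z} | z. z \<in> D}" unfolding edges_def D_def al_def by blast
  have finE: "finite (edges P)" using edge_set_props(3)[OF ma edgesE finD] .
  have pT: "pTutte P x xs y ys = (\<Sum>A\<in>Pow (edges P).
        half_term D ph al (flab P) (wF P) (edges P - A) x xs * half_term D sg al (vlab P) (wV P) A y ys)"
    unfolding pTutte_def D_def ph_def al_def sg_def ..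
  show ?thesis
  proof (intro conjI impI)
    assume "d \<in> darts P \<and> alp P d \<noteq> d"
    then have d: "d \<in> D" "al d \<noteq> d" unfolding D_def al_def by auto
    define e where "e = {d, al d}"
    define E0 where "E0 = edges P - {e}"
    have eE: "e \<in> edges P" using d unfolding e_def edges_def D_def al_def by blast
    have Eeq: "edges P = insert e E0" "e \<notin> E0" using eE unfolding E0_def by auto
    have finE0: "finite E0" using finE unfolding E0_def by simp
    have E0sub: "E0 \<subseteq> {{z, al z} | z. z \<in> D}" using edgesE unfolding E0_def by auto
    have edel: "edges (pdelete P d) = E0"
      unfolding edges_def pdelete_simps E0_def e_def edges_def
      using edges_new[OF ma d(1), of sg] unfolding D_def al_def sg_def by simp
    have econ: "edges (pcontract P d) = E0"
      unfolding edges_def pcontract_simps E0_def e_def edges_def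
      using edges_new[OF ma d(1), of ph] unfolding D_def al_def ph_def by simp
    define D1 where "D1 = darts (pdelete P d)"
    define D2 where "D2 = darts (pcontract P d)"
    have D1: "D1 = new_darts D sg d (al d)" unfolding D1_def pdelete_simps D_def sg_def al_def ..
    have D2: "D2 = new_darts D ph d (al d)" unfolding D2_def pcontract_simps D_def ph_def al_def ..
    have pT1: "pTutte (pdelete P d) x xs y ys = (\<Sum>A\<in>Pow E0.
        half_term D1 (phi (pdelete P d)) (alp (pdelete P d)) (flab (pdelete P d)) (wF (pdelete P d)) (E0 - A) x xs
        * half_term D1 (sig (pdelete P d)) (alp (pdelete P d)) (vlab P) (wV P) A y ys)"
      unfolding pTutte_def edel D1_def by (simp add: pdelete_simps)
    have pT2: "pTutte (pcontract P d) x xs y ys = (\<Sum>A\<in>Pow E0.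
        half_term D2 (phi (pcontract P d)) (alp (pcontract P d)) (flab P) (wF P) (E0 - A) x xs
        * half_term D2 (sig (pcontract P d)) (alp (pcontract P d)) (vlab (pcontract P d)) (wV (pcontract P d)) A y ys)"
      unfolding pTutte_def econ D2_def by (simp add: pcontract_simps)
    have split: "pTutte P x xs y ys =
        (\<Sum>A\<in>Pow E0. half_term D ph al (flab P) (wF P) (edges P - A) x xs * half_term D sg al (vlab P) (wV P) A y ys)
      + (\<Sum>A\<in>Pow E0. half_term D ph al (flab P) (wF P) (edges P - insert e A) x xs * half_term D sg al (vlab P) (wV P) (insert e A) y ys)"
      unfolding pT Eeq(1) by (rule sum_Pow_split[OF finE0 Eeq(2)])
    have t1: "half_term D ph al (flab P) (wF P) (edges P - A) x xs * half_term D sg al (vlab P) (wV P) A y ys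
        = x ^ (2 - eta P d) * (half_term D1 (phi (pdelete P d)) (alp (pdelete P d)) (flab (pdelete P d)) (wF (pdelete P d)) (E0 - A) x xs
        * half_term D1 (sig (pdelete P d)) (alp (pdelete P d)) (vlab P) (wV P) A y ys)" if A: "A \<in> Pow E0" for A
    proof -
      have AE: "A \<subseteq> {{z, al z} | z. z \<in> D}" using A E0sub by auto
      have eA: "{d, al d} \<notin> A" using A Eeq(2) unfolding e_def by auto
      have V: "half_term D sg al (vlab P) (wV P) A y ys = half_term D1 (sig (pdelete P d)) (alp (pdelete P d)) (vlab P) (wV P) A y ys"
        by (rule L1[OF ms ma AE vl d eA D1]) (simp_all add: pdelete_simps D_def sg_def al_def)
      have EA: "edges P - A \<subseteq> {{z, al z} | z. z \<in> D}" using edgesE by auto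
      have eEA: "{d, al d} \<in> edges P - A" using eE eA unfolding e_def by auto
      have F: "half_term D ph al (flab P) (wF P) (edges P - A) x xs = x ^ (2 - card {flab P d, flab P (al d)}) *
          half_term D1 (phi (pdelete P d)) (alp (pdelete P d)) (flab (pdelete P d)) (wF (pdelete P d)) (edges P - A - {{d, al d}}) x xs"
      proof (rule L2[OF mph ma aout EA fl d eEA sg_ph D1])
        show "alp (pdelete P d) = new_alp al sg d (al d)" by (simp add: pdelete_simps sg_def al_def)
        show "\<forall>z\<in>D1. phi (pdelete P d) z = new_perm D sg d (al d) (alp (pdelete P d) z)"
          by (simp add: phi_def pdelete_simps D_def sg_def al_def)
        show "flab (pdelete P d) = (if flab P d = flab P (al d) then flab P
            else (\<lambda>x. if flab P x = flab P (al d) then flab P d else flab P x))"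
          by (simp add: pdelete_simps al_def)
        show "wF (pdelete P d) = (if flab P d = flab P (al d) then (wF P)(flab P d := wF P (flab P d) + 1)
            else (wF P)(flab P d := wF P (flab P d) + wF P (flab P (al d))))"
          by (simp add: pdelete_simps al_def)
      qed
      have "edges P - A - {{d, al d}} = E0 - A" unfolding E0_def e_def by auto
      then show ?thesis using V F unfolding eta_def al_def by (simp add: mult.assoc)
    qed
    have t2: "half_term D ph al (flab P) (wF P) (edges P - insert e A) x xs * half_term D sg al (vlab P) (wV P) (insert e A) y ys
        = y ^ (2 - mu P d) * (half_term D2 (phi (pcontract P d)) (alp (pcontract P d)) (flab P) (wF P) (E0 - A) x xs
        * half_term D2 (sig (pcontract P d)) (alp (pcontract P d)) (vlab (pcontract P d)) (wV (pcontract P d)) A y ys)"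
      if A: "A \<in> Pow E0" for A
    proof -
      have eA: "{d, al d} \<notin> A" using A Eeq(2) unfolding e_def by auto
      have EA: "E0 - A \<subseteq> {{z, al z} | z. z \<in> D}" using E0sub by auto
      have eEA: "{d, al d} \<notin> E0 - A" using Eeq(2) unfolding e_def by auto
      have ainv: "\<forall>z\<in>D2. alp (pcontract P d) (alp (pcontract P d) z) = z"
        using new_alp_inv[OF ma d(1), of ph] unfolding D2 pcontract_simps al_def D_def ph_def by simp
      have F: "half_term D ph al (flab P) (wF P) (E0 - A) x xs = half_term D2 (phi (pcontract P d)) (alp (pcontract P d)) (flab P) (wF P) (E0 - A) x xs"
      proof (rule L1[OF mph ma EA fl d eEA D2])
        show "alp (pcontract P d) = new_alp al ph d (al d)" by (simp add: pcontract_simps ph_def al_def)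
        show "\<forall>z\<in>D2. phi (pcontract P d) z = new_perm D ph d (al d) z"
          using ainv by (simp add: phi_def pcontract_simps D_def ph_def al_def)
      qed
      have iA: "insert e A \<subseteq> {{z, al z} | z. z \<in> D}" using A E0sub eE edgesE by auto
      have eiA: "{d, al d} \<in> insert e A" unfolding e_def by simp
      have V: "half_term D sg al (vlab P) (wV P) (insert e A) y ys = y ^ (2 - card {vlab P d, vlab P (al d)}) *
          half_term D2 (sig (pcontract P d)) (alp (pcontract P d)) (vlab (pcontract P d)) (wV (pcontract P d)) (insert e A - {{d, al d}}) y ys"
      proof (rule L2[OF ms ma aout iA vl d eiA ph_sg D2])
        show "alp (pcontract P d) = new_alp al ph d (al d)" by (simp add: pcontract_simps ph_def al_def)
        show "\<forall>z\<in>D2. sig (pcontract P d) z = new_perm D ph d (al d) (alp (pcontract P d) z)"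
          by (simp add: pcontract_simps D_def ph_def al_def)
        show "vlab (pcontract P d) = (if vlab P d = vlab P (al d) then vlab P
            else (\<lambda>x. if vlab P x = vlab P (al d) then vlab P d else vlab P x))"
          by (simp add: pcontract_simps al_def)
        show "wV (pcontract P d) = (if vlab P d = vlab P (al d) then (wV P)(vlab P d := wV P (vlab P d) + 1)
            else (wV P)(vlab P d := wV P (vlab P d) + wV P (vlab P (al d))))"
          by (simp add: pcontract_simps al_def)
      qed
      have "insert e A - {{d, al d}} = A" using eA unfolding e_def by auto
      moreover have "edges P - insert e A = E0 - A" unfolding E0_def by auto
      ultimately show ?thesis using V F unfolding mu_def al_def by (simp add: mult_ac)
    qed
    have s1: "(\<Sum>A\<in>Pow E0. half_term D ph al (flab P) (wF P) (edges P - A) x xs * half_term D sg al (vlab P) (wV P) A y ys)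
        = x ^ (2 - eta P d) * pTutte (pdelete P d) x xs y ys"
      unfolding pT1 sum_distrib_left by (rule sum.cong) (auto simp: t1)
    have s2: "(\<Sum>A\<in>Pow E0. half_term D ph al (flab P) (wF P) (edges P - insert e A) x xs * half_term D sg al (vlab P) (wV P) (insert e A) y ys)
        = y ^ (2 - mu P d) * pTutte (pcontract P d) x xs y ys"
      unfolding pT2 sum_distrib_left by (rule sum.cong) (auto simp: t2)
    show "pTutte P x xs y ys = x ^ (2 - eta P d) * pTutte (pdelete P d) x xs y ys
            + y ^ (2 - mu P d) * pTutte (pcontract P d) x xs y ys"
      unfolding split s1 s2 ..
  next
    assume E: "edges P = {}"
    have h1: "half_term D ph al (flab P) (wF P) {} x xs
        = (\<Prod>c\<in>flab P ` D. xs (1 - int (card {v \<in> orbits ph D. \<exists>x\<in>v. flab P x = c}) + int (wF P c)))"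
      by (rule ht_empty[OF mph])
    have h2: "half_term D sg al (vlab P) (wV P) {} y ys
        = (\<Prod>b\<in>vlab P ` D. ys (1 - int (card {v \<in> orbits sg D. \<exists>x\<in>v. vlab P x = b}) + int (wV P b)))"
      by (rule ht_empty[OF ms])
    have "pTutte P x xs y ys = half_term D ph al (flab P) (wF P) {} x xs * half_term D sg al (vlab P) (wV P) {} y ys"
      unfolding pT E by simp
    also have "\<dots> = (\<Prod>c\<in>flab P ` darts P. xs (1 - int (fblock_size P c) + int (wF P c))) *
              (\<Prod>b\<in>vlab P ` darts P. ys (1 - int (vblock_size P b) + int (wV P b)))"
      unfolding fblock_size_def vblock_size_def faces_def vertices_def
        D_def[symmetric] ph_def[symmetric] sg_def[symmetric] h1 h2 ..
    finally show "pTutte P x xs y ys = (\<Prod>c\<in>flab P ` darts P. xs (1 - int (fblock_size P c) + int (wF P c))) *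
              (\<Prod>b\<in>vlab P ` darts P. ys (1 - int (vblock_size P b) + int (wV P b)))" .
  qed
qed


end
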